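(* Let $g_4(a,b,c,d)=S^4_3+3S^4_{1,1,1}-T^4_{2,1}$. Then $g_4(a^2,b^2,c^2,d^2)\in\mathcal{E}(\mathcal{P}_{4,6})\setminus\Sigma_{4,6}$, and $g_4\in\mathcal{E}(\mathcal{P}^+_{4,3})$.
   Context: Variables $a,b,c,d$ (also $x_1,\dots,x_4$). $S^4_3=\sum_i x_i^3$, $T^4_{2,1}=\sum_{i}x_i^2\sum_{j\ne i}x_j$, $S^4_{1,1,1}=bcd+acd+abd+abc$. $\mathcal{P}_{4,6}$ is the cone of real homogeneous sextic forms in $a,b,c,d$ that are nonnegative on $\mathbb{R}^4$, $\Sigma_{4,6}\subset\mathcal{P}_{4,6}$ the cone of sums of squares of real cubic forms. $\mathcal{P}^+_{4,3}$ is the cone of all real homogeneous cubic forms in $a,b,c,d$ nonnegative on $\mathbb{R}_{\ge0}^4$. For a closed convex cone $\mathcal{P}$, $f\in\mathcal{P}\setminus\{0\}$ is extremal if $f=g+h$ with $g,h\in\mathcal{P}$ forces $g,h\in\mathbb{R}_{\ge0}f$; $\mathcal{E}(\mathcal{P})$ is the set of extremal elements. *)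

theory Defs
  imports Main Complex_Main
begin

text \<open>Real quaternary forms are represented by their polynomial functions
  \<open>real \<Rightarrow> real \<Rightarrow> real \<Rightarrow> real \<Rightarrow> real\<close> (variables a b c d). Over the
  reals a polynomial is determined by its function, so this is faithful.\<close>

definition monomials_deg :: "nat \<Rightarrow> (nat \<times> nat \<times> nat \<times> nat) set" where
  "monomials_deg n = {(i,j,k,l). i + j + k + l = n}"

definition is_form :: "nat \<Rightarrow> (real \<Rightarrow> real \<Rightarrow> real \<Rightarrow> real \<Rightarrow> real) \<Rightarrow> bool" where
  "is_form n p \<longleftrightarrow> (\<exists>coef :: nat \<times> nat \<times> nat \<times> nat \<Rightarrow> real.
     \<forall>a b c d. p a b c d =
       (\<Sum>(i,j,k,l)\<in>monomials_deg n. coef (i,j,k,l) * a^i * b^j * c^k * d^l))"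

definition P46 :: "(real \<Rightarrow> real \<Rightarrow> real \<Rightarrow> real \<Rightarrow> real) set" where
  "P46 = {p. is_form 6 p \<and> (\<forall>a b c d. 0 \<le> p a b c d)}"

definition Sigma46 :: "(real \<Rightarrow> real \<Rightarrow> real \<Rightarrow> real \<Rightarrow> real) set" where
  "Sigma46 = {p. \<exists>qs. (\<forall>q\<in>set qs. is_form 3 q) \<and>
                  p = (\<lambda>a b c d. \<Sum>q\<leftarrow>qs. (q a b c d)^2)}"

definition P43plus :: "(real \<Rightarrow> real \<Rightarrow> real \<Rightarrow> real \<Rightarrow> real) set" where
  "P43plus = {p. is_form 3 p \<and>
     (\<forall>a b c d. 0 \<le> a \<longrightarrow> 0 \<le> b \<longrightarrow> 0 \<le> c \<longrightarrow> 0 \<le> d \<longrightarrow> 0 \<le> p a b c d)}"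

definition extremals :: "(real \<Rightarrow> real \<Rightarrow> real \<Rightarrow> real \<Rightarrow> real) set
    \<Rightarrow> (real \<Rightarrow> real \<Rightarrow> real \<Rightarrow> real \<Rightarrow> real) set" where
  "extremals K = {f. f \<in> K \<and> f \<noteq> (\<lambda>a b c d. 0) \<and>
     (\<forall>g h. g \<in> K \<longrightarrow> h \<in> K \<longrightarrow> f = (\<lambda>a b c d. g a b c d + h a b c d) \<longrightarrow>
        (\<exists>t\<ge>0. g = (\<lambda>a b c d. t * f a b c d)) \<and> (\<exists>t\<ge>0. h = (\<lambda>a b c d. t * f a b c d)))}"

definition S3 :: "real \<Rightarrow> real \<Rightarrow> real \<Rightarrow> real \<Rightarrow> real" where
  "S3 a b c d = a^3 + b^3 + c^3 + d^3"

definition S111 :: "real \<Rightarrow> real \<Rightarrow> real \<Rightarrow> real \<Rightarrow> real" where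
  "S111 a b c d = b*c*d + a*c*d + a*b*d + a*b*c"

definition T21 :: "real \<Rightarrow> real \<Rightarrow> real \<Rightarrow> real \<Rightarrow> real" where
  "T21 a b c d = a^2*(b+c+d) + b^2*(a+c+d) + c^2*(a+b+d) + d^2*(a+b+c)"

definition g4 :: "real \<Rightarrow> real \<Rightarrow> real \<Rightarrow> real \<Rightarrow> real" where
  "g4 a b c d = S3 a b c d + 3 * S111 a b c d - T21 a b c d"

end

theory Submission
  imports Defs
begin
lemma deriv_min_1d:
  fixes w :: "'m \<Rightarrow> real" and e :: "'m \<Rightarrow> nat"
  assumes nn: "\<And>t. 0 \<le> (\<Sum>m\<in>S. w m * (x+t)^e m)"
      and z: "(\<Sum>m\<in>S. w m * x^e m) = 0"
  shows "(\<Sum>m\<in>S. w m * (real (e m) * x^(e m - 1))) = 0"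
proof -
  have D: "((\<lambda>t. \<Sum>m\<in>S. w m * (x+t)^e m) has_field_derivative
           (\<Sum>m\<in>S. w m * (real (e m) * x^(e m - 1)))) (at 0)"
    apply (rule DERIV_sum)
    apply (rule DERIV_cmult)
    using DERIV_power[OF DERIV_add[OF DERIV_const[of x] DERIV_ident], of "e _" 0]
    by simp
  show ?thesis
    apply (rule DERIV_local_min[OF D, of 1])
    using nn z by auto
qed

lemma grad_a:
  assumes G: "\<forall>a b c d. g a b c d = (\<Sum>(i,j,k,l)\<in>M. cf (i,j,k,l) * a^i*b^j*c^k*d^l)"
    and nn: "\<forall>a b c d. 0 \<le> g a b c d" and z: "g p1 p2 p3 p4 = 0"
  shows "(\<Sum>(i,j,k,l)\<in>M. cf (i,j,k,l) * (real i * p1^(i-1))*p2^j*p3^k*p4^l) = 0"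
proof -
  have "(\<Sum>m\<in>M. (case m of (i,j,k,l) \<Rightarrow> cf (i,j,k,l)*p2^j*p3^k*p4^l) * (real (fst m) * p1^(fst m - 1))) = 0"
  proof (rule deriv_min_1d)
    fix t
    have "(\<Sum>m\<in>M. (case m of (i,j,k,l) \<Rightarrow> cf (i,j,k,l)*p2^j*p3^k*p4^l) * (p1+t)^(fst m)) = g (p1+t) p2 p3 p4"
      using G by (auto intro!: sum.cong simp: algebra_simps)
    then show "0 \<le> (\<Sum>m\<in>M. (case m of (i,j,k,l) \<Rightarrow> cf (i,j,k,l)*p2^j*p3^k*p4^l) * (p1+t)^(fst m))"
      using nn by simp
  next
    have "(\<Sum>m\<in>M. (case m of (i,j,k,l) \<Rightarrow> cf (i,j,k,l)*p2^j*p3^k*p4^l) * p1^(fst m)) = g p1 p2 p3 p4"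
      using G by (auto intro!: sum.cong simp: algebra_simps)
    then show "(\<Sum>m\<in>M. (case m of (i,j,k,l) \<Rightarrow> cf (i,j,k,l)*p2^j*p3^k*p4^l) * p1^(fst m)) = 0" using z by simp
  qed
  moreover have "(\<Sum>(i,j,k,l)\<in>M. cf (i,j,k,l) * (real i * p1^(i-1))*p2^j*p3^k*p4^l) =
    (\<Sum>m\<in>M. (case m of (i,j,k,l) \<Rightarrow> cf (i,j,k,l)*p2^j*p3^k*p4^l) * (real (fst m) * p1^(fst m - 1)))"
    by (rule sum.cong[OF refl]) (clarsimp simp: algebra_simps)
  ultimately show ?thesis by simp
qed

lemma grad_b:
  assumes G: "\<forall>a b c d. g a b c d = (\<Sum>(i,j,k,l)\<in>M. cf (i,j,k,l) * a^i*b^j*c^k*d^l)"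
    and nn: "\<forall>a b c d. 0 \<le> g a b c d" and z: "g p1 p2 p3 p4 = 0"
  shows "(\<Sum>(i,j,k,l)\<in>M. cf (i,j,k,l) * p1^i*(real j * p2^(j-1))*p3^k*p4^l) = 0"
proof -
  have "(\<Sum>m\<in>M. (case m of (i,j,k,l) \<Rightarrow> cf (i,j,k,l)*p1^i*p3^k*p4^l) * (real (fst (snd m)) * p2^(fst (snd m) - 1))) = 0"
  proof (rule deriv_min_1d)
    fix t
    have "(\<Sum>m\<in>M. (case m of (i,j,k,l) \<Rightarrow> cf (i,j,k,l)*p1^i*p3^k*p4^l) * (p2+t)^(fst (snd m))) = g p1 (p2+t) p3 p4"
      using G by (auto intro!: sum.cong simp: algebra_simps)
    then show "0 \<le> (\<Sum>m\<in>M. (case m of (i,j,k,l) \<Rightarrow> cf (i,j,k,l)*p1^i*p3^k*p4^l) * (p2+t)^(fst (snd m)))"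
      using nn by simp
  next
    have "(\<Sum>m\<in>M. (case m of (i,j,k,l) \<Rightarrow> cf (i,j,k,l)*p1^i*p3^k*p4^l) * p2^(fst (snd m))) = g p1 p2 p3 p4"
      using G by (auto intro!: sum.cong simp: algebra_simps)
    then show "(\<Sum>m\<in>M. (case m of (i,j,k,l) \<Rightarrow> cf (i,j,k,l)*p1^i*p3^k*p4^l) * p2^(fst (snd m))) = 0" using z by simp
  qed
  moreover have "(\<Sum>(i,j,k,l)\<in>M. cf (i,j,k,l) * p1^i*(real j * p2^(j-1))*p3^k*p4^l) =
    (\<Sum>m\<in>M. (case m of (i,j,k,l) \<Rightarrow> cf (i,j,k,l)*p1^i*p3^k*p4^l) * (real (fst (snd m)) * p2^(fst (snd m) - 1)))"
    by (rule sum.cong[OF refl]) (clarsimp simp: algebra_simps)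
  ultimately show ?thesis by simp
qed

lemma grad_c:
  assumes G: "\<forall>a b c d. g a b c d = (\<Sum>(i,j,k,l)\<in>M. cf (i,j,k,l) * a^i*b^j*c^k*d^l)"
    and nn: "\<forall>a b c d. 0 \<le> g a b c d" and z: "g p1 p2 p3 p4 = 0"
  shows "(\<Sum>(i,j,k,l)\<in>M. cf (i,j,k,l) * p1^i*p2^j*(real k * p3^(k-1))*p4^l) = 0"
proof -
  have "(\<Sum>m\<in>M. (case m of (i,j,k,l) \<Rightarrow> cf (i,j,k,l)*p1^i*p2^j*p4^l) * (real (fst (snd (snd m))) * p3^(fst (snd (snd m)) - 1))) = 0"
  proof (rule deriv_min_1d)
    fix t
    have "(\<Sum>m\<in>M. (case m of (i,j,k,l) \<Rightarrow> cf (i,j,k,l)*p1^i*p2^j*p4^l) * (p3+t)^(fst (snd (snd m)))) = g p1 p2 (p3+t) p4"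
      using G by (auto intro!: sum.cong simp: algebra_simps)
    then show "0 \<le> (\<Sum>m\<in>M. (case m of (i,j,k,l) \<Rightarrow> cf (i,j,k,l)*p1^i*p2^j*p4^l) * (p3+t)^(fst (snd (snd m))))"
      using nn by simp
  next
    have "(\<Sum>m\<in>M. (case m of (i,j,k,l) \<Rightarrow> cf (i,j,k,l)*p1^i*p2^j*p4^l) * p3^(fst (snd (snd m)))) = g p1 p2 p3 p4"
      using G by (auto intro!: sum.cong simp: algebra_simps)
    then show "(\<Sum>m\<in>M. (case m of (i,j,k,l) \<Rightarrow> cf (i,j,k,l)*p1^i*p2^j*p4^l) * p3^(fst (snd (snd m)))) = 0" using z by simp
  qed
  moreover have "(\<Sum>(i,j,k,l)\<in>M. cf (i,j,k,l) * p1^i*p2^j*(real k * p3^(k-1))*p4^l) =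
    (\<Sum>m\<in>M. (case m of (i,j,k,l) \<Rightarrow> cf (i,j,k,l)*p1^i*p2^j*p4^l) * (real (fst (snd (snd m))) * p3^(fst (snd (snd m)) - 1)))"
    by (rule sum.cong[OF refl]) (clarsimp simp: algebra_simps)
  ultimately show ?thesis by simp
qed

lemma grad_d:
  assumes G: "\<forall>a b c d. g a b c d = (\<Sum>(i,j,k,l)\<in>M. cf (i,j,k,l) * a^i*b^j*c^k*d^l)"
    and nn: "\<forall>a b c d. 0 \<le> g a b c d" and z: "g p1 p2 p3 p4 = 0"
  shows "(\<Sum>(i,j,k,l)\<in>M. cf (i,j,k,l) * p1^i*p2^j*p3^k*(real l * p4^(l-1))) = 0"
proof -
  have "(\<Sum>m\<in>M. (case m of (i,j,k,l) \<Rightarrow> cf (i,j,k,l)*p1^i*p2^j*p3^k) * (real (snd (snd (snd m))) * p4^(snd (snd (snd m)) - 1))) = 0"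
  proof (rule deriv_min_1d)
    fix t
    have "(\<Sum>m\<in>M. (case m of (i,j,k,l) \<Rightarrow> cf (i,j,k,l)*p1^i*p2^j*p3^k) * (p4+t)^(snd (snd (snd m)))) = g p1 p2 p3 (p4+t)"
      using G by (auto intro!: sum.cong simp: algebra_simps)
    then show "0 \<le> (\<Sum>m\<in>M. (case m of (i,j,k,l) \<Rightarrow> cf (i,j,k,l)*p1^i*p2^j*p3^k) * (p4+t)^(snd (snd (snd m))))"
      using nn by simp
  next
    have "(\<Sum>m\<in>M. (case m of (i,j,k,l) \<Rightarrow> cf (i,j,k,l)*p1^i*p2^j*p3^k) * p4^(snd (snd (snd m)))) = g p1 p2 p3 p4"
      using G by (auto intro!: sum.cong simp: algebra_simps)
    then show "(\<Sum>m\<in>M. (case m of (i,j,k,l) \<Rightarrow> cf (i,j,k,l)*p1^i*p2^j*p3^k) * p4^(snd (snd (snd m)))) = 0" using z by simp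
  qed
  moreover have "(\<Sum>(i,j,k,l)\<in>M. cf (i,j,k,l) * p1^i*p2^j*p3^k*(real l * p4^(l-1))) =
    (\<Sum>m\<in>M. (case m of (i,j,k,l) \<Rightarrow> cf (i,j,k,l)*p1^i*p2^j*p3^k) * (real (snd (snd (snd m))) * p4^(snd (snd (snd m)) - 1)))"
    by (rule sum.cong[OF refl]) (clarsimp simp: algebra_simps)
  ultimately show ?thesis by simp
qed

lemma mdrng3: "(x::nat) \<le> 3 \<Longrightarrow> x \<in> {0,1,2,3}" by auto
lemma mdall3: "(i::nat) \<in> {0,1,2,3} \<Longrightarrow> (j::nat) \<in> {0,1,2,3} \<Longrightarrow> (k::nat) \<in> {0,1,2,3} \<Longrightarrow> i+j+k \<le> 3 \<Longrightarrow> (i,j,k,3-i-j-k) \<in> {(0,0,0,3), (0,0,1,2), (0,0,2,1), (0,0,3,0), (0,1,0,2), (0,1,1,1), (0,1,2,0), (0,2,0,1), (0,2,1,0), (0,3,0,0), (1,0,0,2), (1,0,1,1), (1,0,2,0), (1,1,0,1), (1,1,1,0), (1,2,0,0), (2,0,0,1), (2,0,1,0), (2,1,0,0), (3,0,0,0)}"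
  by (elim insertE; simp)
lemma md3_eq: "monomials_deg 3 = {(0,0,0,3), (0,0,1,2), (0,0,2,1), (0,0,3,0), (0,1,0,2), (0,1,1,1), (0,1,2,0), (0,2,0,1), (0,2,1,0), (0,3,0,0), (1,0,0,2), (1,0,1,1), (1,0,2,0), (1,1,0,1), (1,1,1,0), (1,2,0,0), (2,0,0,1), (2,0,1,0), (2,1,0,0), (3,0,0,0)}"
proof
  show "monomials_deg 3 \<subseteq> {(0,0,0,3), (0,0,1,2), (0,0,2,1), (0,0,3,0), (0,1,0,2), (0,1,1,1), (0,1,2,0), (0,2,0,1), (0,2,1,0), (0,3,0,0), (1,0,0,2), (1,0,1,1), (1,0,2,0), (1,1,0,1), (1,1,1,0), (1,2,0,0), (2,0,0,1), (2,0,1,0), (2,1,0,0), (3,0,0,0)}"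
  proof
    fix x assume "x \<in> monomials_deg 3"
    then obtain i j k l where x: "x = (i,j,k,l)" and h: "i + j + k + l = 3"
      by (cases x) (auto simp: monomials_deg_def)
    have l: "l = 3 - i - j - k" and "i+j+k \<le> 3" using h by auto
    have mi: "i \<in> {0,1,2,3}" "j \<in> {0,1,2,3}" "k \<in> {0,1,2,3}" using h by (auto intro!: mdrng3)
    have "(i,j,k,3-i-j-k) \<in> {(0,0,0,3), (0,0,1,2), (0,0,2,1), (0,0,3,0), (0,1,0,2), (0,1,1,1), (0,1,2,0), (0,2,0,1), (0,2,1,0), (0,3,0,0), (1,0,0,2), (1,0,1,1), (1,0,2,0), (1,1,0,1), (1,1,1,0), (1,2,0,0), (2,0,0,1), (2,0,1,0), (2,1,0,0), (3,0,0,0)}"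
      by (rule mdall3[OF mi]) (use h in auto)
    then show "x \<in> {(0,0,0,3), (0,0,1,2), (0,0,2,1), (0,0,3,0), (0,1,0,2), (0,1,1,1), (0,1,2,0), (0,2,0,1), (0,2,1,0), (0,3,0,0), (1,0,0,2), (1,0,1,1), (1,0,2,0), (1,1,0,1), (1,1,1,0), (1,2,0,0), (2,0,0,1), (2,0,1,0), (2,1,0,0), (3,0,0,0)}" by (simp only: x l)
  qed
qed (auto simp: monomials_deg_def)
lemma sum_md3: "(\<Sum>x\<in>monomials_deg 3. F x) = F (0,0,0,3) + F (0,0,1,2) + F (0,0,2,1) + F (0,0,3,0) + F (0,1,0,2) + F (0,1,1,1) + F (0,1,2,0) + F (0,2,0,1) + F (0,2,1,0) + F (0,3,0,0) + F (1,0,0,2) + F (1,0,1,1) + F (1,0,2,0) + F (1,1,0,1) + F (1,1,1,0) + F (1,2,0,0) + F (2,0,0,1) + F (2,0,1,0) + F (2,1,0,0) + F (3,0,0,0)"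
  by (simp add: md3_eq add.assoc)

lemma mdrng6: "(x::nat) \<le> 6 \<Longrightarrow> x \<in> {0,1,2,3,4,5,6}" by auto
lemma mdall6: "(i::nat) \<in> {0,1,2,3,4,5,6} \<Longrightarrow> (j::nat) \<in> {0,1,2,3,4,5,6} \<Longrightarrow> (k::nat) \<in> {0,1,2,3,4,5,6} \<Longrightarrow> i+j+k \<le> 6 \<Longrightarrow> (i,j,k,6-i-j-k) \<in> {(0,0,0,6), (0,0,1,5), (0,0,2,4), (0,0,3,3), (0,0,4,2), (0,0,5,1), (0,0,6,0), (0,1,0,5), (0,1,1,4), (0,1,2,3), (0,1,3,2), (0,1,4,1), (0,1,5,0), (0,2,0,4), (0,2,1,3), (0,2,2,2), (0,2,3,1), (0,2,4,0), (0,3,0,3), (0,3,1,2), (0,3,2,1), (0,3,3,0), (0,4,0,2), (0,4,1,1), (0,4,2,0), (0,5,0,1), (0,5,1,0), (0,6,0,0), (1,0,0,5), (1,0,1,4), (1,0,2,3), (1,0,3,2), (1,0,4,1), (1,0,5,0), (1,1,0,4), (1,1,1,3), (1,1,2,2), (1,1,3,1), (1,1,4,0), (1,2,0,3), (1,2,1,2), (1,2,2,1), (1,2,3,0), (1,3,0,2), (1,3,1,1), (1,3,2,0), (1,4,0,1), (1,4,1,0), (1,5,0,0), (2,0,0,4), (2,0,1,3), (2,0,2,2), (2,0,3,1), (2,0,4,0), (2,1,0,3), (2,1,1,2), (2,1,2,1), (2,1,3,0), (2,2,0,2), (2,2,1,1), (2,2,2,0), (2,3,0,1), (2,3,1,0),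 (2,4,0,0), (3,0,0,3), (3,0,1,2), (3,0,2,1), (3,0,3,0), (3,1,0,2), (3,1,1,1), (3,1,2,0), (3,2,0,1), (3,2,1,0), (3,3,0,0), (4,0,0,2), (4,0,1,1), (4,0,2,0), (4,1,0,1), (4,1,1,0), (4,2,0,0), (5,0,0,1), (5,0,1,0), (5,1,0,0), (6,0,0,0)}"
  by (elim insertE; simp)
lemma md6_eq: "monomials_deg 6 = {(0,0,0,6), (0,0,1,5), (0,0,2,4), (0,0,3,3), (0,0,4,2), (0,0,5,1), (0,0,6,0), (0,1,0,5), (0,1,1,4), (0,1,2,3), (0,1,3,2), (0,1,4,1), (0,1,5,0), (0,2,0,4), (0,2,1,3), (0,2,2,2), (0,2,3,1), (0,2,4,0), (0,3,0,3), (0,3,1,2), (0,3,2,1), (0,3,3,0), (0,4,0,2), (0,4,1,1), (0,4,2,0), (0,5,0,1), (0,5,1,0), (0,6,0,0), (1,0,0,5), (1,0,1,4), (1,0,2,3), (1,0,3,2), (1,0,4,1), (1,0,5,0), (1,1,0,4), (1,1,1,3), (1,1,2,2), (1,1,3,1), (1,1,4,0), (1,2,0,3), (1,2,1,2), (1,2,2,1), (1,2,3,0), (1,3,0,2), (1,3,1,1), (1,3,2,0), (1,4,0,1), (1,4,1,0), (1,5,0,0), (2,0,0,4), (2,0,1,3), (2,0,2,2), (2,0,3,1), (2,0,4,0), (2,1,0,3), (2,1,1,2), (2,1,2,1), (2,1,3,0), (2,2,0,2), (2,2,1,1), (2,2,2,0), (2,3,0,1), (2,3,1,0), (2,4,0,0),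 (3,0,0,3), (3,0,1,2), (3,0,2,1), (3,0,3,0), (3,1,0,2), (3,1,1,1), (3,1,2,0), (3,2,0,1), (3,2,1,0), (3,3,0,0), (4,0,0,2), (4,0,1,1), (4,0,2,0), (4,1,0,1), (4,1,1,0), (4,2,0,0), (5,0,0,1), (5,0,1,0), (5,1,0,0), (6,0,0,0)}"
proof
  show "monomials_deg 6 \<subseteq> {(0,0,0,6), (0,0,1,5), (0,0,2,4), (0,0,3,3), (0,0,4,2), (0,0,5,1), (0,0,6,0), (0,1,0,5), (0,1,1,4), (0,1,2,3), (0,1,3,2), (0,1,4,1), (0,1,5,0), (0,2,0,4), (0,2,1,3), (0,2,2,2), (0,2,3,1), (0,2,4,0), (0,3,0,3), (0,3,1,2), (0,3,2,1), (0,3,3,0), (0,4,0,2), (0,4,1,1), (0,4,2,0), (0,5,0,1), (0,5,1,0), (0,6,0,0), (1,0,0,5), (1,0,1,4), (1,0,2,3), (1,0,3,2), (1,0,4,1), (1,0,5,0), (1,1,0,4), (1,1,1,3), (1,1,2,2), (1,1,3,1), (1,1,4,0), (1,2,0,3), (1,2,1,2), (1,2,2,1), (1,2,3,0), (1,3,0,2), (1,3,1,1), (1,3,2,0), (1,4,0,1), (1,4,1,0), (1,5,0,0), (2,0,0,4), (2,0,1,3), (2,0,2,2), (2,0,3,1), (2,0,4,0), (2,1,0,3), (2,1,1,2), (2,1,2,1), (2,1,3,0), (2,2,0,2), (2,2,1,1), (2,2,2,0), (2,3,0,1), (2,3,1,0), (2,4,0,0), (3,0,0,3), (3,0,1,2),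 (3,0,2,1), (3,0,3,0), (3,1,0,2), (3,1,1,1), (3,1,2,0), (3,2,0,1), (3,2,1,0), (3,3,0,0), (4,0,0,2), (4,0,1,1), (4,0,2,0), (4,1,0,1), (4,1,1,0), (4,2,0,0), (5,0,0,1), (5,0,1,0), (5,1,0,0), (6,0,0,0)}"
  proof
    fix x assume "x \<in> monomials_deg 6"
    then obtain i j k l where x: "x = (i,j,k,l)" and h: "i + j + k + l = 6"
      by (cases x) (auto simp: monomials_deg_def)
    have l: "l = 6 - i - j - k" and "i+j+k \<le> 6" using h by auto
    have mi: "i \<in> {0,1,2,3,4,5,6}" "j \<in> {0,1,2,3,4,5,6}" "k \<in> {0,1,2,3,4,5,6}" using h by (auto intro!: mdrng6)
    have "(i,j,k,6-i-j-k) \<in> {(0,0,0,6), (0,0,1,5), (0,0,2,4), (0,0,3,3), (0,0,4,2), (0,0,5,1), (0,0,6,0), (0,1,0,5), (0,1,1,4), (0,1,2,3), (0,1,3,2), (0,1,4,1), (0,1,5,0), (0,2,0,4), (0,2,1,3), (0,2,2,2), (0,2,3,1), (0,2,4,0), (0,3,0,3), (0,3,1,2), (0,3,2,1), (0,3,3,0), (0,4,0,2), (0,4,1,1), (0,4,2,0), (0,5,0,1), (0,5,1,0), (0,6,0,0), (1,0,0,5), (1,0,1,4), (1,0,2,3), (1,0,3,2), (1,0,4,1), (1,0,5,0), (1,1,0,4), (1,1,1,3), (1,1,2,2), (1,1,3,1), (1,1,4,0), (1,2,0,3), (1,2,1,2), (1,2,2,1), (1,2,3,0), (1,3,0,2),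 (1,3,1,1), (1,3,2,0), (1,4,0,1), (1,4,1,0), (1,5,0,0), (2,0,0,4), (2,0,1,3), (2,0,2,2), (2,0,3,1), (2,0,4,0), (2,1,0,3), (2,1,1,2), (2,1,2,1), (2,1,3,0), (2,2,0,2), (2,2,1,1), (2,2,2,0), (2,3,0,1), (2,3,1,0), (2,4,0,0), (3,0,0,3), (3,0,1,2), (3,0,2,1), (3,0,3,0), (3,1,0,2), (3,1,1,1), (3,1,2,0), (3,2,0,1), (3,2,1,0), (3,3,0,0), (4,0,0,2), (4,0,1,1), (4,0,2,0), (4,1,0,1), (4,1,1,0), (4,2,0,0), (5,0,0,1), (5,0,1,0), (5,1,0,0), (6,0,0,0)}"
      by (rule mdall6[OF mi]) (use h in auto)
    then show "x \<in> {(0,0,0,6), (0,0,1,5), (0,0,2,4), (0,0,3,3), (0,0,4,2), (0,0,5,1), (0,0,6,0), (0,1,0,5), (0,1,1,4), (0,1,2,3), (0,1,3,2), (0,1,4,1), (0,1,5,0), (0,2,0,4), (0,2,1,3), (0,2,2,2), (0,2,3,1), (0,2,4,0), (0,3,0,3), (0,3,1,2), (0,3,2,1), (0,3,3,0), (0,4,0,2), (0,4,1,1), (0,4,2,0), (0,5,0,1), (0,5,1,0), (0,6,0,0), (1,0,0,5), (1,0,1,4), (1,0,2,3), (1,0,3,2), (1,0,4,1), (1,0,5,0), (1,1,0,4), (1,1,1,3), (1,1,2,2), (1,1,3,1), (1,1,4,0), (1,2,0,3), (1,2,1,2), (1,2,2,1), (1,2,3,0), (1,3,0,2), (1,3,1,1),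 (1,3,2,0), (1,4,0,1), (1,4,1,0), (1,5,0,0), (2,0,0,4), (2,0,1,3), (2,0,2,2), (2,0,3,1), (2,0,4,0), (2,1,0,3), (2,1,1,2), (2,1,2,1), (2,1,3,0), (2,2,0,2), (2,2,1,1), (2,2,2,0), (2,3,0,1), (2,3,1,0), (2,4,0,0), (3,0,0,3), (3,0,1,2), (3,0,2,1), (3,0,3,0), (3,1,0,2), (3,1,1,1), (3,1,2,0), (3,2,0,1), (3,2,1,0), (3,3,0,0), (4,0,0,2), (4,0,1,1), (4,0,2,0), (4,1,0,1), (4,1,1,0), (4,2,0,0), (5,0,0,1), (5,0,1,0), (5,1,0,0), (6,0,0,0)}" by (simp only: x l)
  qed
qed (auto simp: monomials_deg_def)
lemma sum_md6: "(\<Sum>x\<in>monomials_deg 6. F x) = F (0,0,0,6) + F (0,0,1,5) + F (0,0,2,4) + F (0,0,3,3) + F (0,0,4,2) + F (0,0,5,1) + F (0,0,6,0) + F (0,1,0,5) + F (0,1,1,4) + F (0,1,2,3) + F (0,1,3,2) + F (0,1,4,1) + F (0,1,5,0) + F (0,2,0,4) + F (0,2,1,3) + F (0,2,2,2) + F (0,2,3,1) + F (0,2,4,0) + F (0,3,0,3) + F (0,3,1,2) + F (0,3,2,1) + F (0,3,3,0) + F (0,4,0,2) + F (0,4,1,1) + F (0,4,2,0) + F (0,5,0,1) + F (0,5,1,0) + F (0,6,0,0) + F (1,0,0,5) + F (1,0,1,4) + F (1,0,2,3) + F (1,0,3,2) + F (1,0,4,1) + F (1,0,5,0) + F (1,1,0,4)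 + F (1,1,1,3) + F (1,1,2,2) + F (1,1,3,1) + F (1,1,4,0) + F (1,2,0,3) + F (1,2,1,2) + F (1,2,2,1) + F (1,2,3,0) + F (1,3,0,2) + F (1,3,1,1) + F (1,3,2,0) + F (1,4,0,1) + F (1,4,1,0) + F (1,5,0,0) + F (2,0,0,4) + F (2,0,1,3) + F (2,0,2,2) + F (2,0,3,1) + F (2,0,4,0) + F (2,1,0,3) + F (2,1,1,2) + F (2,1,2,1) + F (2,1,3,0) + F (2,2,0,2) + F (2,2,1,1) + F (2,2,2,0) + F (2,3,0,1) + F (2,3,1,0) + F (2,4,0,0) + F (3,0,0,3) + F (3,0,1,2) + F (3,0,2,1) + F (3,0,3,0) + F (3,1,0,2) + F (3,1,1,1) + F (3,1,2,0) + F (3,2,0,1) + F (3,2,1,0) + F (3,3,0,0) + F (4,0,0,2) + F (4,0,1,1) + F (4,0,2,0) + F (4,1,0,1) + F (4,1,1,0) + F (4,2,0,0) + F (5,0,0,1) + F (5,0,1,0) + F (5,1,0,0) + F (6,0,0,0)"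
  by (simp add: md6_eq add.assoc)



definition schur :: "real \<Rightarrow> real \<Rightarrow> real \<Rightarrow> real" where
  "schur x y z = x*(x-y)*(x-z) + y*(y-x)*(y-z) + z*(z-x)*(z-y)"

lemma schur_ord: assumes "0 \<le> z" "z \<le> y" "y \<le> x" shows "0 \<le> schur x y z"
proof -
  have e: "schur x y z = (x-y)^2*(x+y-z) + z*((x-z)*(y-z))"
    unfolding schur_def power2_eq_square by (simp add: algebra_simps)
  show ?thesis unfolding e using assms by (intro add_nonneg_nonneg mult_nonneg_nonneg) auto
qed

lemma schur_sym1: "schur x y z = schur y x z" unfolding schur_def by (simp add: algebra_simps)
lemma schur_sym2: "schur x y z = schur x z y" unfolding schur_def by (simp add: algebra_simps)

lemma schur_nonneg: assumes "0 \<le> x" "0 \<le> y" "0 \<le> z" shows "0 \<le> schur x y z"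
proof -
  have "x \<le> y \<or> y \<le> x" "y \<le> z \<or> z \<le> y" "x \<le> z \<or> z \<le> x" by auto
  then show ?thesis using assms schur_ord[of z y x] schur_ord[of y z x] schur_ord[of z x y]
    schur_ord[of x z y] schur_ord[of y x z] schur_ord[of x y z] schur_sym1 schur_sym2
    by metis
qed

lemma g4_shift: "g4 (d+x) (d+y) (d+z) d = schur x y z + 4*d^3 + 3*d^2*(x+y+z) + 2*d*(x*y+y*z+z*x)"
  unfolding g4_def S3_def S111_def T21_def schur_def power2_eq_square power3_eq_cube
  by (simp add: algebra_simps)

lemma g4_s1: "g4 a b c d = g4 b a c d" unfolding g4_def S3_def S111_def T21_def by (simp add: algebra_simps)
lemma g4_s2: "g4 a b c d = g4 a c b d" unfolding g4_def S3_def S111_def T21_def by (simp add: algebra_simps)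
lemma g4_s3: "g4 a b c d = g4 a b d c" unfolding g4_def S3_def S111_def T21_def by (simp add: algebra_simps)

lemma g4_min_d: assumes "0 \<le> d" "d \<le> a" "d \<le> b" "d \<le> c" shows "0 \<le> g4 a b c d"
proof -
  have "g4 a b c d = g4 (d+(a-d)) (d+(b-d)) (d+(c-d)) d" by simp
  also have "\<dots> = schur (a-d) (b-d) (c-d) + 4*d^3 + 3*d^2*((a-d)+(b-d)+(c-d)) + 2*d*((a-d)*(b-d)+(b-d)*(c-d)+(c-d)*(a-d))"
    by (rule g4_shift)
  also have "0 \<le> \<dots>" using assms schur_nonneg[of "a-d" "b-d" "c-d"]
    by (intro add_nonneg_nonneg mult_nonneg_nonneg) auto
  finally show ?thesis .
qed

lemma g4_nonneg: assumes "0 \<le> a" "0 \<le> b" "0 \<le> c" "0 \<le> d" shows "0 \<le> g4 a b c d"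
proof -
  have "(d \<le> a \<and> d \<le> b \<and> d \<le> c) \<or> (c \<le> a \<and> c \<le> b \<and> c \<le> d) \<or> (b \<le> a \<and> b \<le> c \<and> b \<le> d) \<or> (a \<le> b \<and> a \<le> c \<and> a \<le> d)"
    by linarith
  then show ?thesis
  proof (elim disjE)
    assume "d \<le> a \<and> d \<le> b \<and> d \<le> c" then show ?thesis using assms g4_min_d by auto
  next
    assume "c \<le> a \<and> c \<le> b \<and> c \<le> d" then show ?thesis using assms g4_min_d[of c a b d] g4_s3 by auto
  next
    assume "b \<le> a \<and> b \<le> c \<and> b \<le> d" then show ?thesis using assms g4_min_d[of b a d c] g4_s2 g4_s3 by metis
  next
    assume "a \<le> b \<and> a \<le> c \<and> a \<le> d" then show ?thesis using assms g4_min_d[of a d c b] g4_s1 g4_s2 g4_s3 by metis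
  qed
qed
definition c46 :: "nat\<times>nat\<times>nat\<times>nat \<Rightarrow> real" where
  "c46 m = (if m \<in> {(0,0,0,6), (0,0,6,0), (0,6,0,0), (6,0,0,0)} then 1 else if m \<in> {(0,2,2,2), (2,0,2,2), (2,2,0,2), (2,2,2,0)} then 3 else if m \<in> {(0,0,2,4), (0,0,4,2), (0,2,0,4), (0,2,4,0), (0,4,0,2), (0,4,2,0), (2,0,0,4), (2,0,4,0), (2,4,0,0), (4,0,0,2), (4,0,2,0), (4,2,0,0)} then -1 else 0)"
definition c43 :: "nat\<times>nat\<times>nat\<times>nat \<Rightarrow> real" where
  "c43 m = (if m \<in> {(0,0,0,3), (0,0,3,0), (0,3,0,0), (3,0,0,0)} then 1 else if m \<in> {(0,1,1,1), (1,0,1,1), (1,1,0,1), (1,1,1,0)} then 3 else if m \<in> {(0,0,1,2), (0,0,2,1), (0,1,0,2), (0,1,2,0), (0,2,0,1), (0,2,1,0), (1,0,0,2), (1,0,2,0), (1,2,0,0), (2,0,0,1), (2,0,1,0), (2,1,0,0)} then -1 else 0)"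
lemma form_f46: "is_form 6 (\<lambda>a b c d. g4 (a^2) (b^2) (c^2) (d^2))"
  unfolding is_form_def
  by (rule exI[of _ c46 ], intro allI, simp only: sum_md6 prod.case, simp add: c46_def)
     (simp add: g4_def S3_def S111_def T21_def algebra_simps flip: power_mult)
lemma form_g4: "is_form 3 g4"
  unfolding is_form_def
  by (rule exI[of _ c43 ], intro allI, simp only: sum_md3 prod.case, simp add: c43_def)
     (simp add: g4_def S3_def S111_def T21_def algebra_simps)
lemma form_sq:
  assumes "is_form 3 g" shows "is_form 6 (\<lambda>a b c d. g (a^2) (b^2) (c^2) (d^2))"
proof -
  obtain cf where G: "\<forall>a b c d. g a b c d = (\<Sum>(i,j,k,l)\<in>monomials_deg 3. cf (i,j,k,l) * a^i*b^j*c^k*d^l)"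
    using assms unfolding is_form_def by auto
  show ?thesis unfolding is_form_def
    by (rule exI[of _ "\<lambda>(i,j,k,l). if even i \<and> even j \<and> even k \<and> even l then cf (i div 2, j div 2, k div 2, l div 2) else 0" ],
        intro allI, simp only: G[rule_format] sum_md6 sum_md3 prod.case)
       (simp add: flip: power_mult)
qed
lemma cubic_zero:
  assumes Q: "is_form 3 q"
    and z0: "q 1 1 0 0 = 0"
    and z1: "q 1 (-1) 0 0 = 0"
    and z2: "q 1 0 1 0 = 0"
    and z3: "q 1 0 (-1) 0 = 0"
    and z4: "q 1 0 0 1 = 0"
    and z5: "q 1 0 0 (-1) = 0"
    and z6: "q 0 1 1 0 = 0"
    and z7: "q 0 1 (-1) 0 = 0"
    and z8: "q 0 1 0 1 = 0"
    and z9: "q 0 1 0 (-1) = 0"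
    and z10: "q 0 0 1 1 = 0"
    and z11: "q 0 0 1 (-1) = 0"
    and z12: "q 1 1 1 0 = 0"
    and z13: "q 1 1 (-1) 0 = 0"
    and z14: "q 1 (-1) 1 0 = 0"
    and z15: "q 1 (-1) (-1) 0 = 0"
    and z16: "q 1 1 0 1 = 0"
    and z17: "q 1 1 0 (-1) = 0"
    and z18: "q 1 (-1) 0 1 = 0"
    and z19: "q 1 (-1) 0 (-1) = 0"
    and z20: "q 1 0 1 1 = 0"
    and z21: "q 1 0 1 (-1) = 0"
    and z22: "q 1 0 (-1) 1 = 0"
    and z23: "q 1 0 (-1) (-1) = 0"
    and z24: "q 0 1 1 1 = 0"
    and z25: "q 0 1 1 (-1) = 0"
    and z26: "q 0 1 (-1) 1 = 0"
    and z27: "q 0 1 (-1) (-1) = 0"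
  shows "q 1 0 0 0 = 0"
proof -
  obtain cf where G: "\<forall>a b c d. q a b c d = (\<Sum>(i,j,k,l)\<in>monomials_deg 3. cf (i,j,k,l) * a^i*b^j*c^k*d^l)"
    using Q unfolding is_form_def by auto
  have E0: "cf (0,3,0,0) + cf (1,2,0,0) + cf (2,1,0,0) + cf (3,0,0,0) = 0" using G[rule_format, of 1 1 0 0 ] z0 by (simp add: sum_md3)
  have E1: "- cf (0,3,0,0) + cf (1,2,0,0) - cf (2,1,0,0) + cf (3,0,0,0) = 0" using G[rule_format, of 1 "-1" 0 0 ] z1 by (simp add: sum_md3)
  have E2: "cf (0,0,3,0) + cf (1,0,2,0) + cf (2,0,1,0) + cf (3,0,0,0) = 0" using G[rule_format, of 1 0 1 0 ] z2 by (simp add: sum_md3)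
  have E3: "- cf (0,0,3,0) + cf (1,0,2,0) - cf (2,0,1,0) + cf (3,0,0,0) = 0" using G[rule_format, of 1 0 "-1" 0 ] z3 by (simp add: sum_md3)
  have E4: "cf (0,0,0,3) + cf (1,0,0,2) + cf (2,0,0,1) + cf (3,0,0,0) = 0" using G[rule_format, of 1 0 0 1 ] z4 by (simp add: sum_md3)
  have E5: "- cf (0,0,0,3) + cf (1,0,0,2) - cf (2,0,0,1) + cf (3,0,0,0) = 0" using G[rule_format, of 1 0 0 "-1" ] z5 by (simp add: sum_md3)
  have E6: "cf (0,0,3,0) + cf (0,1,2,0) + cf (0,2,1,0) + cf (0,3,0,0) = 0" using G[rule_format, of 0 1 1 0 ] z6 by (simp add: sum_md3)
  have E7: "- cf (0,0,3,0) + cf (0,1,2,0) - cf (0,2,1,0) + cf (0,3,0,0) = 0" using G[rule_format, of 0 1 "-1" 0 ] z7 by (simp add: sum_md3)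
  have E8: "cf (0,0,0,3) + cf (0,1,0,2) + cf (0,2,0,1) + cf (0,3,0,0) = 0" using G[rule_format, of 0 1 0 1 ] z8 by (simp add: sum_md3)
  have E9: "- cf (0,0,0,3) + cf (0,1,0,2) - cf (0,2,0,1) + cf (0,3,0,0) = 0" using G[rule_format, of 0 1 0 "-1" ] z9 by (simp add: sum_md3)
  have E10: "cf (0,0,0,3) + cf (0,0,1,2) + cf (0,0,2,1) + cf (0,0,3,0) = 0" using G[rule_format, of 0 0 1 1 ] z10 by (simp add: sum_md3)
  have E11: "- cf (0,0,0,3) + cf (0,0,1,2) - cf (0,0,2,1) + cf (0,0,3,0) = 0" using G[rule_format, of 0 0 1 "-1" ] z11 by (simp add: sum_md3)
  have E12: "cf (0,0,3,0) + cf (0,1,2,0) + cf (0,2,1,0) + cf (0,3,0,0) + cf (1,0,2,0) + cf (1,1,1,0) + cf (1,2,0,0) + cf (2,0,1,0) + cf (2,1,0,0) + cf (3,0,0,0) = 0" using G[rule_format, of 1 1 1 0 ] z12 by (simp add: sum_md3)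
  have E13: "- cf (0,0,3,0) + cf (0,1,2,0) - cf (0,2,1,0) + cf (0,3,0,0) + cf (1,0,2,0) - cf (1,1,1,0) + cf (1,2,0,0) - cf (2,0,1,0) + cf (2,1,0,0) + cf (3,0,0,0) = 0" using G[rule_format, of 1 1 "-1" 0 ] z13 by (simp add: sum_md3)
  have E14: "cf (0,0,3,0) - cf (0,1,2,0) + cf (0,2,1,0) - cf (0,3,0,0) + cf (1,0,2,0) - cf (1,1,1,0) + cf (1,2,0,0) + cf (2,0,1,0) - cf (2,1,0,0) + cf (3,0,0,0) = 0" using G[rule_format, of 1 "-1" 1 0 ] z14 by (simp add: sum_md3)
  have E15: "- cf (0,0,3,0) - cf (0,1,2,0) - cf (0,2,1,0) - cf (0,3,0,0) + cf (1,0,2,0) + cf (1,1,1,0) + cf (1,2,0,0) - cf (2,0,1,0) - cf (2,1,0,0) + cf (3,0,0,0) = 0" using G[rule_format, of 1 "-1" "-1" 0 ] z15 by (simp add: sum_md3)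
  have E16: "cf (0,0,0,3) + cf (0,1,0,2) + cf (0,2,0,1) + cf (0,3,0,0) + cf (1,0,0,2) + cf (1,1,0,1) + cf (1,2,0,0) + cf (2,0,0,1) + cf (2,1,0,0) + cf (3,0,0,0) = 0" using G[rule_format, of 1 1 0 1 ] z16 by (simp add: sum_md3)
  have E17: "- cf (0,0,0,3) + cf (0,1,0,2) - cf (0,2,0,1) + cf (0,3,0,0) + cf (1,0,0,2) - cf (1,1,0,1) + cf (1,2,0,0) - cf (2,0,0,1) + cf (2,1,0,0) + cf (3,0,0,0) = 0" using G[rule_format, of 1 1 0 "-1" ] z17 by (simp add: sum_md3)
  have E18: "cf (0,0,0,3) - cf (0,1,0,2) + cf (0,2,0,1) - cf (0,3,0,0) + cf (1,0,0,2) - cf (1,1,0,1) + cf (1,2,0,0) + cf (2,0,0,1) - cf (2,1,0,0) + cf (3,0,0,0) = 0" using G[rule_format, of 1 "-1" 0 1 ] z18 by (simp add: sum_md3)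
  have E19: "- cf (0,0,0,3) - cf (0,1,0,2) - cf (0,2,0,1) - cf (0,3,0,0) + cf (1,0,0,2) + cf (1,1,0,1) + cf (1,2,0,0) - cf (2,0,0,1) - cf (2,1,0,0) + cf (3,0,0,0) = 0" using G[rule_format, of 1 "-1" 0 "-1" ] z19 by (simp add: sum_md3)
  have E20: "cf (0,0,0,3) + cf (0,0,1,2) + cf (0,0,2,1) + cf (0,0,3,0) + cf (1,0,0,2) + cf (1,0,1,1) + cf (1,0,2,0) + cf (2,0,0,1) + cf (2,0,1,0) + cf (3,0,0,0) = 0" using G[rule_format, of 1 0 1 1 ] z20 by (simp add: sum_md3)
  have E21: "- cf (0,0,0,3) + cf (0,0,1,2) - cf (0,0,2,1) + cf (0,0,3,0) + cf (1,0,0,2) - cf (1,0,1,1) + cf (1,0,2,0) - cf (2,0,0,1) + cf (2,0,1,0) + cf (3,0,0,0) = 0" using G[rule_format, of 1 0 1 "-1" ] z21 by (simp add: sum_md3)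
  have E22: "cf (0,0,0,3) - cf (0,0,1,2) + cf (0,0,2,1) - cf (0,0,3,0) + cf (1,0,0,2) - cf (1,0,1,1) + cf (1,0,2,0) + cf (2,0,0,1) - cf (2,0,1,0) + cf (3,0,0,0) = 0" using G[rule_format, of 1 0 "-1" 1 ] z22 by (simp add: sum_md3)
  have E23: "- cf (0,0,0,3) - cf (0,0,1,2) - cf (0,0,2,1) - cf (0,0,3,0) + cf (1,0,0,2) + cf (1,0,1,1) + cf (1,0,2,0) - cf (2,0,0,1) - cf (2,0,1,0) + cf (3,0,0,0) = 0" using G[rule_format, of 1 0 "-1" "-1" ] z23 by (simp add: sum_md3)
  have E24: "cf (0,0,0,3) + cf (0,0,1,2) + cf (0,0,2,1) + cf (0,0,3,0) + cf (0,1,0,2) + cf (0,1,1,1) + cf (0,1,2,0) + cf (0,2,0,1) + cf (0,2,1,0) + cf (0,3,0,0) = 0" using G[rule_format, of 0 1 1 1 ] z24 by (simp add: sum_md3)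
  have E25: "- cf (0,0,0,3) + cf (0,0,1,2) - cf (0,0,2,1) + cf (0,0,3,0) + cf (0,1,0,2) - cf (0,1,1,1) + cf (0,1,2,0) - cf (0,2,0,1) + cf (0,2,1,0) + cf (0,3,0,0) = 0" using G[rule_format, of 0 1 1 "-1" ] z25 by (simp add: sum_md3)
  have E26: "cf (0,0,0,3) - cf (0,0,1,2) + cf (0,0,2,1) - cf (0,0,3,0) + cf (0,1,0,2) - cf (0,1,1,1) + cf (0,1,2,0) + cf (0,2,0,1) - cf (0,2,1,0) + cf (0,3,0,0) = 0" using G[rule_format, of 0 1 "-1" 1 ] z26 by (simp add: sum_md3)
  have E27: "- cf (0,0,0,3) - cf (0,0,1,2) - cf (0,0,2,1) - cf (0,0,3,0) + cf (0,1,0,2) + cf (0,1,1,1) + cf (0,1,2,0) - cf (0,2,0,1) - cf (0,2,1,0) + cf (0,3,0,0) = 0" using G[rule_format, of 0 1 "-1" "-1" ] z27 by (simp add: sum_md3)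
  have "cf (3,0,0,0) = 0" using E0 E1 E2 E3 E4 E5 E6 E7 E8 E9 E10 E11 E12 E13 E14 E15 E16 E17 E18 E19 E20 E21 E22 E23 E24 E25 E26 E27 by argo
  then show ?thesis using G[rule_format, of 1 0 0 0 ] by (simp add: sum_md3)
qed
lemma cubic_det:
  assumes Q: "is_form 3 g"
    and o: "\<And>a b c d. 0\<le>a \<Longrightarrow> 0\<le>b \<Longrightarrow> 0\<le>c \<Longrightarrow> 0\<le>d \<Longrightarrow> g a b c d = t * g4 a b c d"
  shows "g = (\<lambda>a b c d. t * g4 a b c d)"
proof -
  obtain cf where G: "\<forall>a b c d. g a b c d = (\<Sum>(i,j,k,l)\<in>monomials_deg 3. cf (i,j,k,l) * a^i*b^j*c^k*d^l)"
    using Q unfolding is_form_def by auto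
  have E0: "cf (0,0,0,3) = t * 1"
  proof -
    have "g 0 0 0 1 = t * g4 0 0 0 1" by (rule o) auto
    then show ?thesis using G[rule_format, of 0 0 0 1 ] by (simp add: sum_md3 g4_def S3_def S111_def T21_def)
  qed
  have C0003: "cf (0,0,0,3) = t" using E0  by argo
  have E1: "cf (0,0,3,0) = t * 1"
  proof -
    have "g 0 0 1 0 = t * g4 0 0 1 0" by (rule o) auto
    then show ?thesis using G[rule_format, of 0 0 1 0 ] by (simp add: sum_md3 g4_def S3_def S111_def T21_def)
  qed
  have C0030: "cf (0,0,3,0) = t" using E1  by argo
  have E2: "cf (0,3,0,0) = t * 1"
  proof -
    have "g 0 1 0 0 = t * g4 0 1 0 0" by (rule o) auto
    then show ?thesis using G[rule_format, of 0 1 0 0 ] by (simp add: sum_md3 g4_def S3_def S111_def T21_def)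
  qed
  have C0300: "cf (0,3,0,0) = t" using E2  by argo
  have E3: "cf (3,0,0,0) = t * 1"
  proof -
    have "g 1 0 0 0 = t * g4 1 0 0 0" by (rule o) auto
    then show ?thesis using G[rule_format, of 1 0 0 0 ] by (simp add: sum_md3 g4_def S3_def S111_def T21_def)
  qed
  have C3000: "cf (3,0,0,0) = t" using E3  by argo
  have E4: "cf (0,0,0,3) + cf (0,0,1,2) + cf (0,0,2,1) + cf (0,0,3,0) = t * 0"
  proof -
    have "g 0 0 1 1 = t * g4 0 0 1 1" by (rule o) auto
    then show ?thesis using G[rule_format, of 0 0 1 1 ] by (simp add: sum_md3 g4_def S3_def S111_def T21_def)
  qed
  have E5: "8 * cf (0,0,0,3) + 4 * cf (0,0,1,2) + 2 * cf (0,0,2,1) + cf (0,0,3,0) = t * 3"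
  proof -
    have "g 0 0 1 2 = t * g4 0 0 1 2" by (rule o) auto
    then show ?thesis using G[rule_format, of 0 0 1 2 ] by (simp add: sum_md3 g4_def S3_def S111_def T21_def)
  qed
  have C0012: "cf (0,0,1,2) = - t" using E4 E5 C0003 C0030 by argo
  have C0021: "cf (0,0,2,1) = - t" using E4 E5 C0003 C0030 by argo
  have E6: "cf (0,0,0,3) + cf (0,1,0,2) + cf (0,2,0,1) + cf (0,3,0,0) = t * 0"
  proof -
    have "g 0 1 0 1 = t * g4 0 1 0 1" by (rule o) auto
    then show ?thesis using G[rule_format, of 0 1 0 1 ] by (simp add: sum_md3 g4_def S3_def S111_def T21_def)
  qed
  have E7: "8 * cf (0,0,0,3) + 4 * cf (0,1,0,2) + 2 * cf (0,2,0,1) + cf (0,3,0,0) = t * 3"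
  proof -
    have "g 0 1 0 2 = t * g4 0 1 0 2" by (rule o) auto
    then show ?thesis using G[rule_format, of 0 1 0 2 ] by (simp add: sum_md3 g4_def S3_def S111_def T21_def)
  qed
  have C0102: "cf (0,1,0,2) = - t" using E6 E7 C0003 C0300 by argo
  have C0201: "cf (0,2,0,1) = - t" using E6 E7 C0003 C0300 by argo
  have E8: "cf (0,0,3,0) + cf (0,1,2,0) + cf (0,2,1,0) + cf (0,3,0,0) = t * 0"
  proof -
    have "g 0 1 1 0 = t * g4 0 1 1 0" by (rule o) auto
    then show ?thesis using G[rule_format, of 0 1 1 0 ] by (simp add: sum_md3 g4_def S3_def S111_def T21_def)
  qed
  have E9: "8 * cf (0,0,3,0) + 4 * cf (0,1,2,0) + 2 * cf (0,2,1,0) + cf (0,3,0,0) = t * 3"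
  proof -
    have "g 0 1 2 0 = t * g4 0 1 2 0" by (rule o) auto
    then show ?thesis using G[rule_format, of 0 1 2 0 ] by (simp add: sum_md3 g4_def S3_def S111_def T21_def)
  qed
  have C0120: "cf (0,1,2,0) = - t" using E8 E9 C0030 C0300 by argo
  have C0210: "cf (0,2,1,0) = - t" using E8 E9 C0030 C0300 by argo
  have E10: "cf (0,0,0,3) + cf (0,0,1,2) + cf (0,0,2,1) + cf (0,0,3,0) + cf (0,1,0,2) + cf (0,1,1,1) + cf (0,1,2,0) + cf (0,2,0,1) + cf (0,2,1,0) + cf (0,3,0,0) = t * 0"
  proof -
    have "g 0 1 1 1 = t * g4 0 1 1 1" by (rule o) auto
    then show ?thesis using G[rule_format, of 0 1 1 1 ] by (simp add: sum_md3 g4_def S3_def S111_def T21_def)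
  qed
  have C0111: "cf (0,1,1,1) = 3 * t" using E10 C0003 C0012 C0021 C0030 C0102 C0120 C0201 C0210 C0300 by argo
  have E11: "cf (0,0,0,3) + cf (1,0,0,2) + cf (2,0,0,1) + cf (3,0,0,0) = t * 0"
  proof -
    have "g 1 0 0 1 = t * g4 1 0 0 1" by (rule o) auto
    then show ?thesis using G[rule_format, of 1 0 0 1 ] by (simp add: sum_md3 g4_def S3_def S111_def T21_def)
  qed
  have E12: "8 * cf (0,0,0,3) + 4 * cf (1,0,0,2) + 2 * cf (2,0,0,1) + cf (3,0,0,0) = t * 3"
  proof -
    have "g 1 0 0 2 = t * g4 1 0 0 2" by (rule o) auto
    then show ?thesis using G[rule_format, of 1 0 0 2 ] by (simp add: sum_md3 g4_def S3_def S111_def T21_def)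
  qed
  have C1002: "cf (1,0,0,2) = - t" using E11 E12 C0003 C3000 by argo
  have C2001: "cf (2,0,0,1) = - t" using E11 E12 C0003 C3000 by argo
  have E13: "cf (0,0,3,0) + cf (1,0,2,0) + cf (2,0,1,0) + cf (3,0,0,0) = t * 0"
  proof -
    have "g 1 0 1 0 = t * g4 1 0 1 0" by (rule o) auto
    then show ?thesis using G[rule_format, of 1 0 1 0 ] by (simp add: sum_md3 g4_def S3_def S111_def T21_def)
  qed
  have E14: "8 * cf (0,0,3,0) + 4 * cf (1,0,2,0) + 2 * cf (2,0,1,0) + cf (3,0,0,0) = t * 3"
  proof -
    have "g 1 0 2 0 = t * g4 1 0 2 0" by (rule o) auto
    then show ?thesis using G[rule_format, of 1 0 2 0 ] by (simp add: sum_md3 g4_def S3_def S111_def T21_def)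
  qed
  have C1020: "cf (1,0,2,0) = - t" using E13 E14 C0030 C3000 by argo
  have C2010: "cf (2,0,1,0) = - t" using E13 E14 C0030 C3000 by argo
  have E15: "cf (0,0,0,3) + cf (0,0,1,2) + cf (0,0,2,1) + cf (0,0,3,0) + cf (1,0,0,2) + cf (1,0,1,1) + cf (1,0,2,0) + cf (2,0,0,1) + cf (2,0,1,0) + cf (3,0,0,0) = t * 0"
  proof -
    have "g 1 0 1 1 = t * g4 1 0 1 1" by (rule o) auto
    then show ?thesis using G[rule_format, of 1 0 1 1 ] by (simp add: sum_md3 g4_def S3_def S111_def T21_def)
  qed
  have C1011: "cf (1,0,1,1) = 3 * t" using E15 C0003 C0012 C0021 C0030 C1002 C1020 C2001 C2010 C3000 by argo
  have E16: "cf (0,3,0,0) + cf (1,2,0,0) + cf (2,1,0,0) + cf (3,0,0,0) = t * 0"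
  proof -
    have "g 1 1 0 0 = t * g4 1 1 0 0" by (rule o) auto
    then show ?thesis using G[rule_format, of 1 1 0 0 ] by (simp add: sum_md3 g4_def S3_def S111_def T21_def)
  qed
  have E17: "8 * cf (0,3,0,0) + 4 * cf (1,2,0,0) + 2 * cf (2,1,0,0) + cf (3,0,0,0) = t * 3"
  proof -
    have "g 1 2 0 0 = t * g4 1 2 0 0" by (rule o) auto
    then show ?thesis using G[rule_format, of 1 2 0 0 ] by (simp add: sum_md3 g4_def S3_def S111_def T21_def)
  qed
  have C1200: "cf (1,2,0,0) = - t" using E16 E17 C0300 C3000 by argo
  have C2100: "cf (2,1,0,0) = - t" using E16 E17 C0300 C3000 by argo
  have E18: "cf (0,0,0,3) + cf (0,1,0,2) + cf (0,2,0,1) + cf (0,3,0,0) + cf (1,0,0,2) + cf (1,1,0,1) + cf (1,2,0,0) + cf (2,0,0,1) + cf (2,1,0,0) + cf (3,0,0,0) = t * 0"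
  proof -
    have "g 1 1 0 1 = t * g4 1 1 0 1" by (rule o) auto
    then show ?thesis using G[rule_format, of 1 1 0 1 ] by (simp add: sum_md3 g4_def S3_def S111_def T21_def)
  qed
  have C1101: "cf (1,1,0,1) = 3 * t" using E18 C0003 C0102 C0201 C0300 C1002 C1200 C2001 C2100 C3000 by argo
  have E19: "cf (0,0,3,0) + cf (0,1,2,0) + cf (0,2,1,0) + cf (0,3,0,0) + cf (1,0,2,0) + cf (1,1,1,0) + cf (1,2,0,0) + cf (2,0,1,0) + cf (2,1,0,0) + cf (3,0,0,0) = t * 0"
  proof -
    have "g 1 1 1 0 = t * g4 1 1 1 0" by (rule o) auto
    then show ?thesis using G[rule_format, of 1 1 1 0 ] by (simp add: sum_md3 g4_def S3_def S111_def T21_def)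
  qed
  have C1110: "cf (1,1,1,0) = 3 * t" using E19 C0030 C0120 C0210 C0300 C1020 C1200 C2010 C2100 C3000 by argo
  show ?thesis
    by (intro ext, simp only: G[rule_format] sum_md3 prod.case C0003 C0030 C0300 C3000 C0012 C0021 C0102 C0201 C0120 C0210 C0111 C1002 C2001 C1020 C2010 C1011 C1200 C2100 C1101 C1110)
       (simp add: g4_def S3_def S111_def T21_def algebra_simps)
qed
lemma ext46:
  assumes g: "g \<in> P46" and h: "h \<in> P46"
    and f: "\<forall>a b c d. g4 (a^2) (b^2) (c^2) (d^2) = g a b c d + h a b c d"
  shows "\<exists>t\<ge>0. \<forall>a b c d. g a b c d = t * g4 (a^2) (b^2) (c^2) (d^2)"
proof -
  obtain cf where G: "\<forall>a b c d. g a b c d = (\<Sum>(i,j,k,l)\<in>monomials_deg 6. cf (i,j,k,l) * a^i*b^j*c^k*d^l)"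
    using g unfolding P46_def is_form_def by auto
  have nn: "\<forall>a b c d. 0 \<le> g a b c d" using g unfolding P46_def by auto
  have hn: "\<forall>a b c d. 0 \<le> h a b c d" using h unfolding P46_def by auto
  have z: "g a b c d = 0" if "g4 (a^2) (b^2) (c^2) (d^2) = 0" for a b c d
    using f nn hn that by (metis add_nonneg_eq_0_iff)
  have z0: "g 0 0 1 (-1) = 0" by (rule z) (simp add: g4_def S3_def S111_def T21_def)
  have z1: "g 0 0 1 1 = 0" by (rule z) (simp add: g4_def S3_def S111_def T21_def)
  have z2: "g 0 1 (-1) 0 = 0" by (rule z) (simp add: g4_def S3_def S111_def T21_def)
  have z3: "g 0 1 0 (-1) = 0" by (rule z) (simp add: g4_def S3_def S111_def T21_def)
  have z4: "g 0 1 0 1 = 0" by (rule z) (simp add: g4_def S3_def S111_def T21_def)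
  have z5: "g 0 1 1 (-1) = 0" by (rule z) (simp add: g4_def S3_def S111_def T21_def)
  have z6: "g 0 1 1 0 = 0" by (rule z) (simp add: g4_def S3_def S111_def T21_def)
  have z7: "g 0 1 1 1 = 0" by (rule z) (simp add: g4_def S3_def S111_def T21_def)
  have z8: "g 1 (-1) (-1) 0 = 0" by (rule z) (simp add: g4_def S3_def S111_def T21_def)
  have z9: "g 1 (-1) 0 0 = 0" by (rule z) (simp add: g4_def S3_def S111_def T21_def)
  have z10: "g 1 (-1) 0 1 = 0" by (rule z) (simp add: g4_def S3_def S111_def T21_def)
  have z11: "g 1 (-1) 1 0 = 0" by (rule z) (simp add: g4_def S3_def S111_def T21_def)
  have z12: "g 1 0 (-1) 0 = 0" by (rule z) (simp add: g4_def S3_def S111_def T21_def)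
  have z13: "g 1 0 0 (-1) = 0" by (rule z) (simp add: g4_def S3_def S111_def T21_def)
  have z14: "g 1 0 0 1 = 0" by (rule z) (simp add: g4_def S3_def S111_def T21_def)
  have z15: "g 1 0 1 (-1) = 0" by (rule z) (simp add: g4_def S3_def S111_def T21_def)
  have z16: "g 1 0 1 0 = 0" by (rule z) (simp add: g4_def S3_def S111_def T21_def)
  have z17: "g 1 0 1 1 = 0" by (rule z) (simp add: g4_def S3_def S111_def T21_def)
  have z18: "g 1 1 (-1) 0 = 0" by (rule z) (simp add: g4_def S3_def S111_def T21_def)
  have z19: "g 1 1 0 (-1) = 0" by (rule z) (simp add: g4_def S3_def S111_def T21_def)
  have z20: "g 1 1 0 0 = 0" by (rule z) (simp add: g4_def S3_def S111_def T21_def)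
  have z21: "g 1 1 0 1 = 0" by (rule z) (simp add: g4_def S3_def S111_def T21_def)
  have z22: "g 1 1 1 0 = 0" by (rule z) (simp add: g4_def S3_def S111_def T21_def)
  have E0: "cf (1,5,0,0) + 2 * cf (2,4,0,0) + 3 * cf (3,3,0,0) + 4 * cf (4,2,0,0) + 5 * cf (5,1,0,0) + 6 * cf (6,0,0,0) = 0" using grad_a[OF G nn z20] by (simp add: sum_md6)
  have E1: "6 * cf (0,6,0,0) + 5 * cf (1,5,0,0) + 4 * cf (2,4,0,0) + 3 * cf (3,3,0,0) + 2 * cf (4,2,0,0) + cf (5,1,0,0) = 0" using grad_b[OF G nn z20] by (simp add: sum_md6)
  have E2: "cf (0,5,1,0) + cf (1,4,1,0) + cf (2,3,1,0) + cf (3,2,1,0) + cf (4,1,1,0) + cf (5,0,1,0) = 0" using grad_c[OF G nn z20] by (simp add: sum_md6)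
  have E3: "cf (0,5,0,1) + cf (1,4,0,1) + cf (2,3,0,1) + cf (3,2,0,1) + cf (4,1,0,1) + cf (5,0,0,1) = 0" using grad_d[OF G nn z20] by (simp add: sum_md6)
  have E4: "- cf (1,5,0,0) + 2 * cf (2,4,0,0) - 3 * cf (3,3,0,0) + 4 * cf (4,2,0,0) - 5 * cf (5,1,0,0) + 6 * cf (6,0,0,0) = 0" using grad_a[OF G nn z9] by (simp add: sum_md6)
  have E5: "- 6 * cf (0,6,0,0) + 5 * cf (1,5,0,0) - 4 * cf (2,4,0,0) + 3 * cf (3,3,0,0) - 2 * cf (4,2,0,0) + cf (5,1,0,0) = 0" using grad_b[OF G nn z9] by (simp add: sum_md6)
  have E6: "- cf (0,5,1,0) + cf (1,4,1,0) - cf (2,3,1,0) + cf (3,2,1,0) - cf (4,1,1,0) + cf (5,0,1,0) = 0" using grad_c[OF G nn z9] by (simp add: sum_md6)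
  have E7: "- cf (0,5,0,1) + cf (1,4,0,1) - cf (2,3,0,1) + cf (3,2,0,1) - cf (4,1,0,1) + cf (5,0,0,1) = 0" using grad_d[OF G nn z9] by (simp add: sum_md6)
  have E8: "cf (1,0,5,0) + 2 * cf (2,0,4,0) + 3 * cf (3,0,3,0) + 4 * cf (4,0,2,0) + 5 * cf (5,0,1,0) + 6 * cf (6,0,0,0) = 0" using grad_a[OF G nn z16] by (simp add: sum_md6)
  have E9: "cf (0,1,5,0) + cf (1,1,4,0) + cf (2,1,3,0) + cf (3,1,2,0) + cf (4,1,1,0) + cf (5,1,0,0) = 0" using grad_b[OF G nn z16] by (simp add: sum_md6)
  have E10: "6 * cf (0,0,6,0) + 5 * cf (1,0,5,0) + 4 * cf (2,0,4,0) + 3 * cf (3,0,3,0) + 2 * cf (4,0,2,0) + cf (5,0,1,0) = 0" using grad_c[OF G nn z16] by (simp add: sum_md6)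
  have E11: "cf (0,0,5,1) + cf (1,0,4,1) + cf (2,0,3,1) + cf (3,0,2,1) + cf (4,0,1,1) + cf (5,0,0,1) = 0" using grad_d[OF G nn z16] by (simp add: sum_md6)
  have E12: "- cf (1,0,5,0) + 2 * cf (2,0,4,0) - 3 * cf (3,0,3,0) + 4 * cf (4,0,2,0) - 5 * cf (5,0,1,0) + 6 * cf (6,0,0,0) = 0" using grad_a[OF G nn z12] by (simp add: sum_md6)
  have E13: "- cf (0,1,5,0) + cf (1,1,4,0) - cf (2,1,3,0) + cf (3,1,2,0) - cf (4,1,1,0) + cf (5,1,0,0) = 0" using grad_b[OF G nn z12] by (simp add: sum_md6)
  have E14: "- 6 * cf (0,0,6,0) + 5 * cf (1,0,5,0) - 4 * cf (2,0,4,0) + 3 * cf (3,0,3,0) - 2 * cf (4,0,2,0) + cf (5,0,1,0) = 0" using grad_c[OF G nn z12] by (simp add: sum_md6)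
  have E15: "- cf (0,0,5,1) + cf (1,0,4,1) - cf (2,0,3,1) + cf (3,0,2,1) - cf (4,0,1,1) + cf (5,0,0,1) = 0" using grad_d[OF G nn z12] by (simp add: sum_md6)
  have E16: "cf (1,0,0,5) + 2 * cf (2,0,0,4) + 3 * cf (3,0,0,3) + 4 * cf (4,0,0,2) + 5 * cf (5,0,0,1) + 6 * cf (6,0,0,0) = 0" using grad_a[OF G nn z14] by (simp add: sum_md6)
  have E17: "cf (0,1,0,5) + cf (1,1,0,4) + cf (2,1,0,3) + cf (3,1,0,2) + cf (4,1,0,1) + cf (5,1,0,0) = 0" using grad_b[OF G nn z14] by (simp add: sum_md6)
  have E18: "cf (0,0,1,5) + cf (1,0,1,4) + cf (2,0,1,3) + cf (3,0,1,2) + cf (4,0,1,1) + cf (5,0,1,0) = 0" using grad_c[OF G nn z14] by (simp add: sum_md6)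
  have E19: "6 * cf (0,0,0,6) + 5 * cf (1,0,0,5) + 4 * cf (2,0,0,4) + 3 * cf (3,0,0,3) + 2 * cf (4,0,0,2) + cf (5,0,0,1) = 0" using grad_d[OF G nn z14] by (simp add: sum_md6)
  have E20: "- cf (1,0,0,5) + 2 * cf (2,0,0,4) - 3 * cf (3,0,0,3) + 4 * cf (4,0,0,2) - 5 * cf (5,0,0,1) + 6 * cf (6,0,0,0) = 0" using grad_a[OF G nn z13] by (simp add: sum_md6)
  have E21: "- cf (0,1,0,5) + cf (1,1,0,4) - cf (2,1,0,3) + cf (3,1,0,2) - cf (4,1,0,1) + cf (5,1,0,0) = 0" using grad_b[OF G nn z13] by (simp add: sum_md6)
  have E22: "- cf (0,0,1,5) + cf (1,0,1,4) - cf (2,0,1,3) + cf (3,0,1,2) - cf (4,0,1,1) + cf (5,0,1,0) = 0" using grad_c[OF G nn z13] by (simp add: sum_md6)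
  have E23: "- 6 * cf (0,0,0,6) + 5 * cf (1,0,0,5) - 4 * cf (2,0,0,4) + 3 * cf (3,0,0,3) - 2 * cf (4,0,0,2) + cf (5,0,0,1) = 0" using grad_d[OF G nn z13] by (simp add: sum_md6)
  have E24: "cf (1,0,5,0) + cf (1,1,4,0) + cf (1,2,3,0) + cf (1,3,2,0) + cf (1,4,1,0) + cf (1,5,0,0) = 0" using grad_a[OF G nn z6] by (simp add: sum_md6)
  have E25: "cf (0,1,5,0) + 2 * cf (0,2,4,0) + 3 * cf (0,3,3,0) + 4 * cf (0,4,2,0) + 5 * cf (0,5,1,0) + 6 * cf (0,6,0,0) = 0" using grad_b[OF G nn z6] by (simp add: sum_md6)
  have E26: "6 * cf (0,0,6,0) + 5 * cf (0,1,5,0) + 4 * cf (0,2,4,0) + 3 * cf (0,3,3,0) + 2 * cf (0,4,2,0) + cf (0,5,1,0) = 0" using grad_c[OF G nn z6] by (simp add: sum_md6)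
  have E27: "cf (0,0,5,1) + cf (0,1,4,1) + cf (0,2,3,1) + cf (0,3,2,1) + cf (0,4,1,1) + cf (0,5,0,1) = 0" using grad_d[OF G nn z6] by (simp add: sum_md6)
  have E28: "- cf (1,0,5,0) + cf (1,1,4,0) - cf (1,2,3,0) + cf (1,3,2,0) - cf (1,4,1,0) + cf (1,5,0,0) = 0" using grad_a[OF G nn z2] by (simp add: sum_md6)
  have E29: "- cf (0,1,5,0) + 2 * cf (0,2,4,0) - 3 * cf (0,3,3,0) + 4 * cf (0,4,2,0) - 5 * cf (0,5,1,0) + 6 * cf (0,6,0,0) = 0" using grad_b[OF G nn z2] by (simp add: sum_md6)
  have E30: "- 6 * cf (0,0,6,0) + 5 * cf (0,1,5,0) - 4 * cf (0,2,4,0) + 3 * cf (0,3,3,0) - 2 * cf (0,4,2,0) + cf (0,5,1,0) = 0" using grad_c[OF G nn z2] by (simp add: sum_md6)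
  have E31: "- cf (0,0,5,1) + cf (0,1,4,1) - cf (0,2,3,1) + cf (0,3,2,1) - cf (0,4,1,1) + cf (0,5,0,1) = 0" using grad_d[OF G nn z2] by (simp add: sum_md6)
  have E32: "cf (1,0,0,5) + cf (1,1,0,4) + cf (1,2,0,3) + cf (1,3,0,2) + cf (1,4,0,1) + cf (1,5,0,0) = 0" using grad_a[OF G nn z4] by (simp add: sum_md6)
  have E33: "cf (0,1,0,5) + 2 * cf (0,2,0,4) + 3 * cf (0,3,0,3) + 4 * cf (0,4,0,2) + 5 * cf (0,5,0,1) + 6 * cf (0,6,0,0) = 0" using grad_b[OF G nn z4] by (simp add: sum_md6)
  have E34: "cf (0,0,1,5) + cf (0,1,1,4) + cf (0,2,1,3) + cf (0,3,1,2) + cf (0,4,1,1) + cf (0,5,1,0) = 0" using grad_c[OF G nn z4] by (simp add: sum_md6)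
  have E35: "6 * cf (0,0,0,6) + 5 * cf (0,1,0,5) + 4 * cf (0,2,0,4) + 3 * cf (0,3,0,3) + 2 * cf (0,4,0,2) + cf (0,5,0,1) = 0" using grad_d[OF G nn z4] by (simp add: sum_md6)
  have E36: "- cf (1,0,0,5) + cf (1,1,0,4) - cf (1,2,0,3) + cf (1,3,0,2) - cf (1,4,0,1) + cf (1,5,0,0) = 0" using grad_a[OF G nn z3] by (simp add: sum_md6)
  have E37: "- cf (0,1,0,5) + 2 * cf (0,2,0,4) - 3 * cf (0,3,0,3) + 4 * cf (0,4,0,2) - 5 * cf (0,5,0,1) + 6 * cf (0,6,0,0) = 0" using grad_b[OF G nn z3] by (simp add: sum_md6)
  have E38: "- cf (0,0,1,5) + cf (0,1,1,4) - cf (0,2,1,3) + cf (0,3,1,2) - cf (0,4,1,1) + cf (0,5,1,0) = 0" using grad_c[OF G nn z3] by (simp add: sum_md6)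
  have E39: "- 6 * cf (0,0,0,6) + 5 * cf (0,1,0,5) - 4 * cf (0,2,0,4) + 3 * cf (0,3,0,3) - 2 * cf (0,4,0,2) + cf (0,5,0,1) = 0" using grad_d[OF G nn z3] by (simp add: sum_md6)
  have E40: "cf (1,0,0,5) + cf (1,0,1,4) + cf (1,0,2,3) + cf (1,0,3,2) + cf (1,0,4,1) + cf (1,0,5,0) = 0" using grad_a[OF G nn z1] by (simp add: sum_md6)
  have E41: "cf (0,1,0,5) + cf (0,1,1,4) + cf (0,1,2,3) + cf (0,1,3,2) + cf (0,1,4,1) + cf (0,1,5,0) = 0" using grad_b[OF G nn z1] by (simp add: sum_md6)
  have E42: "cf (0,0,1,5) + 2 * cf (0,0,2,4) + 3 * cf (0,0,3,3) + 4 * cf (0,0,4,2) + 5 * cf (0,0,5,1) + 6 * cf (0,0,6,0) = 0" using grad_c[OF G nn z1] by (simp add: sum_md6)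
  have E43: "6 * cf (0,0,0,6) + 5 * cf (0,0,1,5) + 4 * cf (0,0,2,4) + 3 * cf (0,0,3,3) + 2 * cf (0,0,4,2) + cf (0,0,5,1) = 0" using grad_d[OF G nn z1] by (simp add: sum_md6)
  have E44: "- cf (1,0,0,5) + cf (1,0,1,4) - cf (1,0,2,3) + cf (1,0,3,2) - cf (1,0,4,1) + cf (1,0,5,0) = 0" using grad_a[OF G nn z0] by (simp add: sum_md6)
  have E45: "- cf (0,1,0,5) + cf (0,1,1,4) - cf (0,1,2,3) + cf (0,1,3,2) - cf (0,1,4,1) + cf (0,1,5,0) = 0" using grad_b[OF G nn z0] by (simp add: sum_md6)
  have E46: "- cf (0,0,1,5) + 2 * cf (0,0,2,4) - 3 * cf (0,0,3,3) + 4 * cf (0,0,4,2) - 5 * cf (0,0,5,1) + 6 * cf (0,0,6,0) = 0" using grad_c[OF G nn z0] by (simp add: sum_md6)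
  have E47: "- 6 * cf (0,0,0,6) + 5 * cf (0,0,1,5) - 4 * cf (0,0,2,4) + 3 * cf (0,0,3,3) - 2 * cf (0,0,4,2) + cf (0,0,5,1) = 0" using grad_d[OF G nn z0] by (simp add: sum_md6)
  have E48: "cf (1,0,5,0) + cf (1,1,4,0) + cf (1,2,3,0) + cf (1,3,2,0) + cf (1,4,1,0) + cf (1,5,0,0) + 2 * cf (2,0,4,0) + 2 * cf (2,1,3,0) + 2 * cf (2,2,2,0) + 2 * cf (2,3,1,0) + 2 * cf (2,4,0,0) + 3 * cf (3,0,3,0) + 3 * cf (3,1,2,0) + 3 * cf (3,2,1,0) + 3 * cf (3,3,0,0) + 4 * cf (4,0,2,0) + 4 * cf (4,1,1,0) + 4 * cf (4,2,0,0) + 5 * cf (5,0,1,0) + 5 * cf (5,1,0,0) + 6 * cf (6,0,0,0) = 0" using grad_a[OF G nn z22] by (simp add: sum_md6)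
  have E49: "cf (0,1,5,0) + 2 * cf (0,2,4,0) + 3 * cf (0,3,3,0) + 4 * cf (0,4,2,0) + 5 * cf (0,5,1,0) + 6 * cf (0,6,0,0) + cf (1,1,4,0) + 2 * cf (1,2,3,0) + 3 * cf (1,3,2,0) + 4 * cf (1,4,1,0) + 5 * cf (1,5,0,0) + cf (2,1,3,0) + 2 * cf (2,2,2,0) + 3 * cf (2,3,1,0) + 4 * cf (2,4,0,0) + cf (3,1,2,0) + 2 * cf (3,2,1,0) + 3 * cf (3,3,0,0) + cf (4,1,1,0) + 2 * cf (4,2,0,0) + cf (5,1,0,0) = 0" using grad_b[OF G nn z22] by (simp add: sum_md6)
  have E50: "6 * cf (0,0,6,0) + 5 * cf (0,1,5,0) + 4 * cf (0,2,4,0) + 3 * cf (0,3,3,0) + 2 * cf (0,4,2,0) + cf (0,5,1,0) + 5 * cf (1,0,5,0) + 4 * cf (1,1,4,0) + 3 * cf (1,2,3,0) + 2 * cf (1,3,2,0) + cf (1,4,1,0) + 4 * cf (2,0,4,0) + 3 * cf (2,1,3,0) + 2 * cf (2,2,2,0) + cf (2,3,1,0) + 3 * cf (3,0,3,0) + 2 * cf (3,1,2,0) + cf (3,2,1,0) + 2 * cf (4,0,2,0) + cf (4,1,1,0) + cf (5,0,1,0) = 0" using grad_c[OF G nn z22] by (simp add: sum_md6)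
  have E51: "cf (0,0,5,1) + cf (0,1,4,1) + cf (0,2,3,1) + cf (0,3,2,1) + cf (0,4,1,1) + cf (0,5,0,1) + cf (1,0,4,1) + cf (1,1,3,1) + cf (1,2,2,1) + cf (1,3,1,1) + cf (1,4,0,1) + cf (2,0,3,1) + cf (2,1,2,1) + cf (2,2,1,1) + cf (2,3,0,1) + cf (3,0,2,1) + cf (3,1,1,1) + cf (3,2,0,1) + cf (4,0,1,1) + cf (4,1,0,1) + cf (5,0,0,1) = 0" using grad_d[OF G nn z22] by (simp add: sum_md6)
  have E52: "- cf (1,0,5,0) + cf (1,1,4,0) - cf (1,2,3,0) + cf (1,3,2,0) - cf (1,4,1,0) + cf (1,5,0,0) + 2 * cf (2,0,4,0) - 2 * cf (2,1,3,0) + 2 * cf (2,2,2,0) - 2 * cf (2,3,1,0) + 2 * cf (2,4,0,0) - 3 * cf (3,0,3,0) + 3 * cf (3,1,2,0) - 3 * cf (3,2,1,0) + 3 * cf (3,3,0,0) + 4 * cf (4,0,2,0) - 4 * cf (4,1,1,0) + 4 * cf (4,2,0,0) - 5 * cf (5,0,1,0) + 5 * cf (5,1,0,0) + 6 * cf (6,0,0,0) = 0" using grad_a[OF G nn z18] by (simp add: sum_md6)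
  have E53: "- cf (0,1,5,0) + 2 * cf (0,2,4,0) - 3 * cf (0,3,3,0) + 4 * cf (0,4,2,0) - 5 * cf (0,5,1,0) + 6 * cf (0,6,0,0) + cf (1,1,4,0) - 2 * cf (1,2,3,0) + 3 * cf (1,3,2,0) - 4 * cf (1,4,1,0) + 5 * cf (1,5,0,0) - cf (2,1,3,0) + 2 * cf (2,2,2,0) - 3 * cf (2,3,1,0) + 4 * cf (2,4,0,0) + cf (3,1,2,0) - 2 * cf (3,2,1,0) + 3 * cf (3,3,0,0) - cf (4,1,1,0) + 2 * cf (4,2,0,0) + cf (5,1,0,0) = 0" using grad_b[OF G nn z18] by (simp add: sum_md6)
  have E54: "- 6 * cf (0,0,6,0) + 5 * cf (0,1,5,0) - 4 * cf (0,2,4,0) + 3 * cf (0,3,3,0) - 2 * cf (0,4,2,0) + cf (0,5,1,0) + 5 * cf (1,0,5,0) - 4 * cf (1,1,4,0) + 3 * cf (1,2,3,0) - 2 * cf (1,3,2,0) + cf (1,4,1,0) - 4 * cf (2,0,4,0) + 3 * cf (2,1,3,0) - 2 * cf (2,2,2,0) + cf (2,3,1,0) + 3 * cf (3,0,3,0) - 2 * cf (3,1,2,0) + cf (3,2,1,0) - 2 * cf (4,0,2,0) + cf (4,1,1,0) + cf (5,0,1,0) = 0" using grad_c[OF G nn z18] by (simp add: sum_md6)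
  have E55: "- cf (0,0,5,1) + cf (0,1,4,1) - cf (0,2,3,1) + cf (0,3,2,1) - cf (0,4,1,1) + cf (0,5,0,1) + cf (1,0,4,1) - cf (1,1,3,1) + cf (1,2,2,1) - cf (1,3,1,1) + cf (1,4,0,1) - cf (2,0,3,1) + cf (2,1,2,1) - cf (2,2,1,1) + cf (2,3,0,1) + cf (3,0,2,1) - cf (3,1,1,1) + cf (3,2,0,1) - cf (4,0,1,1) + cf (4,1,0,1) + cf (5,0,0,1) = 0" using grad_d[OF G nn z18] by (simp add: sum_md6)
  have E56: "cf (1,0,5,0) - cf (1,1,4,0) + cf (1,2,3,0) - cf (1,3,2,0) + cf (1,4,1,0) - cf (1,5,0,0) + 2 * cf (2,0,4,0) - 2 * cf (2,1,3,0) + 2 * cf (2,2,2,0) - 2 * cf (2,3,1,0) + 2 * cf (2,4,0,0) + 3 * cf (3,0,3,0) - 3 * cf (3,1,2,0) + 3 * cf (3,2,1,0) - 3 * cf (3,3,0,0) + 4 * cf (4,0,2,0) - 4 * cf (4,1,1,0) + 4 * cf (4,2,0,0) + 5 * cf (5,0,1,0) - 5 * cf (5,1,0,0) + 6 * cf (6,0,0,0) = 0" using grad_a[OF G nn z11] by (simp add: sum_md6)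
  have E58: "6 * cf (0,0,6,0) - 5 * cf (0,1,5,0) + 4 * cf (0,2,4,0) - 3 * cf (0,3,3,0) + 2 * cf (0,4,2,0) - cf (0,5,1,0) + 5 * cf (1,0,5,0) - 4 * cf (1,1,4,0) + 3 * cf (1,2,3,0) - 2 * cf (1,3,2,0) + cf (1,4,1,0) + 4 * cf (2,0,4,0) - 3 * cf (2,1,3,0) + 2 * cf (2,2,2,0) - cf (2,3,1,0) + 3 * cf (3,0,3,0) - 2 * cf (3,1,2,0) + cf (3,2,1,0) + 2 * cf (4,0,2,0) - cf (4,1,1,0) + cf (5,0,1,0) = 0" using grad_c[OF G nn z11] by (simp add: sum_md6)
  have E59: "cf (0,0,5,1) - cf (0,1,4,1) + cf (0,2,3,1) - cf (0,3,2,1) + cf (0,4,1,1) - cf (0,5,0,1) + cf (1,0,4,1) - cf (1,1,3,1) + cf (1,2,2,1) - cf (1,3,1,1) + cf (1,4,0,1) + cf (2,0,3,1) - cf (2,1,2,1) + cf (2,2,1,1) - cf (2,3,0,1) + cf (3,0,2,1) - cf (3,1,1,1) + cf (3,2,0,1) + cf (4,0,1,1) - cf (4,1,0,1) + cf (5,0,0,1) = 0" using grad_d[OF G nn z11] by (simp add: sum_md6)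
  have E60: "- cf (1,0,5,0) - cf (1,1,4,0) - cf (1,2,3,0) - cf (1,3,2,0) - cf (1,4,1,0) - cf (1,5,0,0) + 2 * cf (2,0,4,0) + 2 * cf (2,1,3,0) + 2 * cf (2,2,2,0) + 2 * cf (2,3,1,0) + 2 * cf (2,4,0,0) - 3 * cf (3,0,3,0) - 3 * cf (3,1,2,0) - 3 * cf (3,2,1,0) - 3 * cf (3,3,0,0) + 4 * cf (4,0,2,0) + 4 * cf (4,1,1,0) + 4 * cf (4,2,0,0) - 5 * cf (5,0,1,0) - 5 * cf (5,1,0,0) + 6 * cf (6,0,0,0) = 0" using grad_a[OF G nn z8] by (simp add: sum_md6)
  have E63: "- cf (0,0,5,1) - cf (0,1,4,1) - cf (0,2,3,1) - cf (0,3,2,1) - cf (0,4,1,1) - cf (0,5,0,1) + cf (1,0,4,1) + cf (1,1,3,1) + cf (1,2,2,1) + cf (1,3,1,1) + cf (1,4,0,1) - cf (2,0,3,1) - cf (2,1,2,1) - cf (2,2,1,1) - cf (2,3,0,1) + cf (3,0,2,1) + cf (3,1,1,1) + cf (3,2,0,1) - cf (4,0,1,1) - cf (4,1,0,1) + cf (5,0,0,1) = 0" using grad_d[OF G nn z8] by (simp add: sum_md6)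
  have E64: "cf (1,0,0,5) + cf (1,1,0,4) + cf (1,2,0,3) + cf (1,3,0,2) + cf (1,4,0,1) + cf (1,5,0,0) + 2 * cf (2,0,0,4) + 2 * cf (2,1,0,3) + 2 * cf (2,2,0,2) + 2 * cf (2,3,0,1) + 2 * cf (2,4,0,0) + 3 * cf (3,0,0,3) + 3 * cf (3,1,0,2) + 3 * cf (3,2,0,1) + 3 * cf (3,3,0,0) + 4 * cf (4,0,0,2) + 4 * cf (4,1,0,1) + 4 * cf (4,2,0,0) + 5 * cf (5,0,0,1) + 5 * cf (5,1,0,0) + 6 * cf (6,0,0,0) = 0" using grad_a[OF G nn z21] by (simp add: sum_md6)
  have E65: "cf (0,1,0,5) + 2 * cf (0,2,0,4) + 3 * cf (0,3,0,3) + 4 * cf (0,4,0,2) + 5 * cf (0,5,0,1) + 6 * cf (0,6,0,0) + cf (1,1,0,4) + 2 * cf (1,2,0,3) + 3 * cf (1,3,0,2) + 4 * cf (1,4,0,1) + 5 * cf (1,5,0,0) + cf (2,1,0,3) + 2 * cf (2,2,0,2) + 3 * cf (2,3,0,1) + 4 * cf (2,4,0,0) + cf (3,1,0,2) + 2 * cf (3,2,0,1) + 3 * cf (3,3,0,0) + cf (4,1,0,1) + 2 * cf (4,2,0,0) + cf (5,1,0,0) = 0" using grad_b[OF G nn z21] by (simp add: sum_md6)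
  have E66: "cf (0,0,1,5) + cf (0,1,1,4) + cf (0,2,1,3) + cf (0,3,1,2) + cf (0,4,1,1) + cf (0,5,1,0) + cf (1,0,1,4) + cf (1,1,1,3) + cf (1,2,1,2) + cf (1,3,1,1) + cf (1,4,1,0) + cf (2,0,1,3) + cf (2,1,1,2) + cf (2,2,1,1) + cf (2,3,1,0) + cf (3,0,1,2) + cf (3,1,1,1) + cf (3,2,1,0) + cf (4,0,1,1) + cf (4,1,1,0) + cf (5,0,1,0) = 0" using grad_c[OF G nn z21] by (simp add: sum_md6)
  have E67: "6 * cf (0,0,0,6) + 5 * cf (0,1,0,5) + 4 * cf (0,2,0,4) + 3 * cf (0,3,0,3) + 2 * cf (0,4,0,2) + cf (0,5,0,1) + 5 * cf (1,0,0,5) + 4 * cf (1,1,0,4) + 3 * cf (1,2,0,3) + 2 * cf (1,3,0,2) + cf (1,4,0,1) + 4 * cf (2,0,0,4) + 3 * cf (2,1,0,3) + 2 * cf (2,2,0,2) + cf (2,3,0,1) + 3 * cf (3,0,0,3) + 2 * cf (3,1,0,2) + cf (3,2,0,1) + 2 * cf (4,0,0,2) + cf (4,1,0,1) + cf (5,0,0,1) = 0" using grad_d[OF G nn z21] by (simp add: sum_md6)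
  have E68: "- cf (1,0,0,5) + cf (1,1,0,4) - cf (1,2,0,3) + cf (1,3,0,2) - cf (1,4,0,1) + cf (1,5,0,0) + 2 * cf (2,0,0,4) - 2 * cf (2,1,0,3) + 2 * cf (2,2,0,2) - 2 * cf (2,3,0,1) + 2 * cf (2,4,0,0) - 3 * cf (3,0,0,3) + 3 * cf (3,1,0,2) - 3 * cf (3,2,0,1) + 3 * cf (3,3,0,0) + 4 * cf (4,0,0,2) - 4 * cf (4,1,0,1) + 4 * cf (4,2,0,0) - 5 * cf (5,0,0,1) + 5 * cf (5,1,0,0) + 6 * cf (6,0,0,0) = 0" using grad_a[OF G nn z19] by (simp add: sum_md6)
  have E70: "- cf (0,0,1,5) + cf (0,1,1,4) - cf (0,2,1,3) + cf (0,3,1,2) - cf (0,4,1,1) + cf (0,5,1,0) + cf (1,0,1,4) - cf (1,1,1,3) + cf (1,2,1,2) - cf (1,3,1,1) + cf (1,4,1,0) - cf (2,0,1,3) + cf (2,1,1,2) - cf (2,2,1,1) + cf (2,3,1,0) + cf (3,0,1,2) - cf (3,1,1,1) + cf (3,2,1,0) - cf (4,0,1,1) + cf (4,1,1,0) + cf (5,0,1,0) = 0" using grad_c[OF G nn z19] by (simp add: sum_md6)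
  have E71: "- 6 * cf (0,0,0,6) + 5 * cf (0,1,0,5) - 4 * cf (0,2,0,4) + 3 * cf (0,3,0,3) - 2 * cf (0,4,0,2) + cf (0,5,0,1) + 5 * cf (1,0,0,5) - 4 * cf (1,1,0,4) + 3 * cf (1,2,0,3) - 2 * cf (1,3,0,2) + cf (1,4,0,1) - 4 * cf (2,0,0,4) + 3 * cf (2,1,0,3) - 2 * cf (2,2,0,2) + cf (2,3,0,1) + 3 * cf (3,0,0,3) - 2 * cf (3,1,0,2) + cf (3,2,0,1) - 2 * cf (4,0,0,2) + cf (4,1,0,1) + cf (5,0,0,1) = 0" using grad_d[OF G nn z19] by (simp add: sum_md6)
  have E72: "cf (1,0,0,5) - cf (1,1,0,4) + cf (1,2,0,3) - cf (1,3,0,2) + cf (1,4,0,1) - cf (1,5,0,0) + 2 * cf (2,0,0,4) - 2 * cf (2,1,0,3) + 2 * cf (2,2,0,2) - 2 * cf (2,3,0,1) + 2 * cf (2,4,0,0) + 3 * cf (3,0,0,3) - 3 * cf (3,1,0,2) + 3 * cf (3,2,0,1) - 3 * cf (3,3,0,0) + 4 * cf (4,0,0,2) - 4 * cf (4,1,0,1) + 4 * cf (4,2,0,0) + 5 * cf (5,0,0,1) - 5 * cf (5,1,0,0) + 6 * cf (6,0,0,0) = 0" using grad_a[OF G nn z10] by (simp add: sum_md6)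
  have E74: "cf (0,0,1,5) - cf (0,1,1,4) + cf (0,2,1,3) - cf (0,3,1,2) + cf (0,4,1,1) - cf (0,5,1,0) + cf (1,0,1,4) - cf (1,1,1,3) + cf (1,2,1,2) - cf (1,3,1,1) + cf (1,4,1,0) + cf (2,0,1,3) - cf (2,1,1,2) + cf (2,2,1,1) - cf (2,3,1,0) + cf (3,0,1,2) - cf (3,1,1,1) + cf (3,2,1,0) + cf (4,0,1,1) - cf (4,1,1,0) + cf (5,0,1,0) = 0" using grad_c[OF G nn z10] by (simp add: sum_md6)
  have E75: "6 * cf (0,0,0,6) - 5 * cf (0,1,0,5) + 4 * cf (0,2,0,4) - 3 * cf (0,3,0,3) + 2 * cf (0,4,0,2) - cf (0,5,0,1) + 5 * cf (1,0,0,5) - 4 * cf (1,1,0,4) + 3 * cf (1,2,0,3) - 2 * cf (1,3,0,2) + cf (1,4,0,1) + 4 * cf (2,0,0,4) - 3 * cf (2,1,0,3) + 2 * cf (2,2,0,2) - cf (2,3,0,1) + 3 * cf (3,0,0,3) - 2 * cf (3,1,0,2) + cf (3,2,0,1) + 2 * cf (4,0,0,2) - cf (4,1,0,1) + cf (5,0,0,1) = 0" using grad_d[OF G nn z10] by (simp add: sum_md6)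
  have E80: "cf (1,0,0,5) + cf (1,0,1,4) + cf (1,0,2,3) + cf (1,0,3,2) + cf (1,0,4,1) + cf (1,0,5,0) + 2 * cf (2,0,0,4) + 2 * cf (2,0,1,3) + 2 * cf (2,0,2,2) + 2 * cf (2,0,3,1) + 2 * cf (2,0,4,0) + 3 * cf (3,0,0,3) + 3 * cf (3,0,1,2) + 3 * cf (3,0,2,1) + 3 * cf (3,0,3,0) + 4 * cf (4,0,0,2) + 4 * cf (4,0,1,1) + 4 * cf (4,0,2,0) + 5 * cf (5,0,0,1) + 5 * cf (5,0,1,0) + 6 * cf (6,0,0,0) = 0" using grad_a[OF G nn z17] by (simp add: sum_md6)
  have E81: "cf (0,1,0,5) + cf (0,1,1,4) + cf (0,1,2,3) + cf (0,1,3,2) + cf (0,1,4,1) + cf (0,1,5,0) + cf (1,1,0,4) + cf (1,1,1,3) + cf (1,1,2,2) + cf (1,1,3,1) + cf (1,1,4,0) + cf (2,1,0,3) + cf (2,1,1,2) + cf (2,1,2,1) + cf (2,1,3,0) + cf (3,1,0,2) + cf (3,1,1,1) + cf (3,1,2,0) + cf (4,1,0,1) + cf (4,1,1,0) + cf (5,1,0,0) = 0" using grad_b[OF G nn z17] by (simp add: sum_md6)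
  have E82: "cf (0,0,1,5) + 2 * cf (0,0,2,4) + 3 * cf (0,0,3,3) + 4 * cf (0,0,4,2) + 5 * cf (0,0,5,1) + 6 * cf (0,0,6,0) + cf (1,0,1,4) + 2 * cf (1,0,2,3) + 3 * cf (1,0,3,2) + 4 * cf (1,0,4,1) + 5 * cf (1,0,5,0) + cf (2,0,1,3) + 2 * cf (2,0,2,2) + 3 * cf (2,0,3,1) + 4 * cf (2,0,4,0) + cf (3,0,1,2) + 2 * cf (3,0,2,1) + 3 * cf (3,0,3,0) + cf (4,0,1,1) + 2 * cf (4,0,2,0) + cf (5,0,1,0) = 0" using grad_c[OF G nn z17] by (simp add: sum_md6)
  have E83: "6 * cf (0,0,0,6) + 5 * cf (0,0,1,5) + 4 * cf (0,0,2,4) + 3 * cf (0,0,3,3) + 2 * cf (0,0,4,2) + cf (0,0,5,1) + 5 * cf (1,0,0,5) + 4 * cf (1,0,1,4) + 3 * cf (1,0,2,3) + 2 * cf (1,0,3,2) + cf (1,0,4,1) + 4 * cf (2,0,0,4) + 3 * cf (2,0,1,3) + 2 * cf (2,0,2,2) + cf (2,0,3,1) + 3 * cf (3,0,0,3) + 2 * cf (3,0,1,2) + cf (3,0,2,1) + 2 * cf (4,0,0,2) + cf (4,0,1,1) + cf (5,0,0,1) = 0" using grad_d[OF G nn z17] by (simp add: sum_md6)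
  have E84: "- cf (1,0,0,5) + cf (1,0,1,4) - cf (1,0,2,3) + cf (1,0,3,2) - cf (1,0,4,1) + cf (1,0,5,0) + 2 * cf (2,0,0,4) - 2 * cf (2,0,1,3) + 2 * cf (2,0,2,2) - 2 * cf (2,0,3,1) + 2 * cf (2,0,4,0) - 3 * cf (3,0,0,3) + 3 * cf (3,0,1,2) - 3 * cf (3,0,2,1) + 3 * cf (3,0,3,0) + 4 * cf (4,0,0,2) - 4 * cf (4,0,1,1) + 4 * cf (4,0,2,0) - 5 * cf (5,0,0,1) + 5 * cf (5,0,1,0) + 6 * cf (6,0,0,0) = 0" using grad_a[OF G nn z15] by (simp add: sum_md6)
  have E85: "- cf (0,1,0,5) + cf (0,1,1,4) - cf (0,1,2,3) + cf (0,1,3,2) - cf (0,1,4,1) + cf (0,1,5,0) + cf (1,1,0,4) - cf (1,1,1,3) + cf (1,1,2,2) - cf (1,1,3,1) + cf (1,1,4,0) - cf (2,1,0,3) + cf (2,1,1,2) - cf (2,1,2,1) + cf (2,1,3,0) + cf (3,1,0,2) - cf (3,1,1,1) + cf (3,1,2,0) - cf (4,1,0,1) + cf (4,1,1,0) + cf (5,1,0,0) = 0" using grad_b[OF G nn z15] by (simp add: sum_md6)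
  have E87: "- 6 * cf (0,0,0,6) + 5 * cf (0,0,1,5) - 4 * cf (0,0,2,4) + 3 * cf (0,0,3,3) - 2 * cf (0,0,4,2) + cf (0,0,5,1) + 5 * cf (1,0,0,5) - 4 * cf (1,0,1,4) + 3 * cf (1,0,2,3) - 2 * cf (1,0,3,2) + cf (1,0,4,1) - 4 * cf (2,0,0,4) + 3 * cf (2,0,1,3) - 2 * cf (2,0,2,2) + cf (2,0,3,1) + 3 * cf (3,0,0,3) - 2 * cf (3,0,1,2) + cf (3,0,2,1) - 2 * cf (4,0,0,2) + cf (4,0,1,1) + cf (5,0,0,1) = 0" using grad_d[OF G nn z15] by (simp add: sum_md6)
  have E96: "cf (1,0,0,5) + cf (1,0,1,4) + cf (1,0,2,3) + cf (1,0,3,2) + cf (1,0,4,1) + cf (1,0,5,0) + cf (1,1,0,4) + cf (1,1,1,3) + cf (1,1,2,2) + cf (1,1,3,1) + cf (1,1,4,0) + cf (1,2,0,3) + cf (1,2,1,2) + cf (1,2,2,1) + cf (1,2,3,0) + cf (1,3,0,2) + cf (1,3,1,1) + cf (1,3,2,0) + cf (1,4,0,1) + cf (1,4,1,0) + cf (1,5,0,0) = 0" using grad_a[OF G nn z7] by (simp add: sum_md6)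
  have E97: "cf (0,1,0,5) + cf (0,1,1,4) + cf (0,1,2,3) + cf (0,1,3,2) + cf (0,1,4,1) + cf (0,1,5,0) + 2 * cf (0,2,0,4) + 2 * cf (0,2,1,3) + 2 * cf (0,2,2,2) + 2 * cf (0,2,3,1) + 2 * cf (0,2,4,0) + 3 * cf (0,3,0,3) + 3 * cf (0,3,1,2) + 3 * cf (0,3,2,1) + 3 * cf (0,3,3,0) + 4 * cf (0,4,0,2) + 4 * cf (0,4,1,1) + 4 * cf (0,4,2,0) + 5 * cf (0,5,0,1) + 5 * cf (0,5,1,0) + 6 * cf (0,6,0,0) = 0" using grad_b[OF G nn z7] by (simp add: sum_md6)
  have E98: "cf (0,0,1,5) + 2 * cf (0,0,2,4) + 3 * cf (0,0,3,3) + 4 * cf (0,0,4,2) + 5 * cf (0,0,5,1) + 6 * cf (0,0,6,0) + cf (0,1,1,4) + 2 * cf (0,1,2,3) + 3 * cf (0,1,3,2) + 4 * cf (0,1,4,1) + 5 * cf (0,1,5,0) + cf (0,2,1,3) + 2 * cf (0,2,2,2) + 3 * cf (0,2,3,1) + 4 * cf (0,2,4,0) + cf (0,3,1,2) + 2 * cf (0,3,2,1) + 3 * cf (0,3,3,0) + cf (0,4,1,1) + 2 * cf (0,4,2,0) + cf (0,5,1,0) = 0" using grad_c[OF G nn z7] by (simp add: sum_md6)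
  have E99: "6 * cf (0,0,0,6) + 5 * cf (0,0,1,5) + 4 * cf (0,0,2,4) + 3 * cf (0,0,3,3) + 2 * cf (0,0,4,2) + cf (0,0,5,1) + 5 * cf (0,1,0,5) + 4 * cf (0,1,1,4) + 3 * cf (0,1,2,3) + 2 * cf (0,1,3,2) + cf (0,1,4,1) + 4 * cf (0,2,0,4) + 3 * cf (0,2,1,3) + 2 * cf (0,2,2,2) + cf (0,2,3,1) + 3 * cf (0,3,0,3) + 2 * cf (0,3,1,2) + cf (0,3,2,1) + 2 * cf (0,4,0,2) + cf (0,4,1,1) + cf (0,5,0,1) = 0" using grad_d[OF G nn z7] by (simp add: sum_md6)
  have E101: "- cf (0,1,0,5) + cf (0,1,1,4) - cf (0,1,2,3) + cf (0,1,3,2) - cf (0,1,4,1) + cf (0,1,5,0) + 2 * cf (0,2,0,4) - 2 * cf (0,2,1,3) + 2 * cf (0,2,2,2) - 2 * cf (0,2,3,1) + 2 * cf (0,2,4,0) - 3 * cf (0,3,0,3) + 3 * cf (0,3,1,2) - 3 * cf (0,3,2,1) + 3 * cf (0,3,3,0) + 4 * cf (0,4,0,2) - 4 * cf (0,4,1,1) + 4 * cf (0,4,2,0) - 5 * cf (0,5,0,1) + 5 * cf (0,5,1,0) + 6 * cf (0,6,0,0) = 0" using grad_b[OF G nn z5] by (simp add: sum_md6)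
  have C60: "cf (2,2,2,0) = 3 * cf (6,0,0,0)" using E0 E4 E8 E12 E48 E52 E56 E60 by argo
  have C26: "cf (0,5,1,0) = 0" using E0 E2 E4 E6 E8 E9 E12 E13 E25 E26 E29 E30 E52 E56 C60 by argo
  have C12: "cf (0,1,5,0) = 0" using E0 E2 E4 E6 E8 E9 E12 E13 E25 E26 E29 E30 E52 E56 C26 C60 by argo
  have C21: "cf (0,3,3,0) = 0" using E0 E2 E4 E6 E8 E9 E12 E13 E25 E26 E29 E30 E52 E56 C12 C26 C60 by argo
  have C33: "cf (1,0,5,0) = 0" using E2 E48 E49 E50 E52 E53 E54 C12 C21 C26 C60 by argo
  have C67: "cf (3,0,3,0) = 0" using E8 E10 E12 E14 C33 by argo
  have C81: "cf (5,0,1,0) = 0" using E8 E10 E12 E14 C33 C67 by argo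
  have C47: "cf (1,4,1,0) = 0" using E2 E6 E9 E13 E24 E28 E48 E52 C12 C26 C33 C60 C67 C81 by argo
  have C62: "cf (2,3,1,0) = 0" using E2 E6 E9 E13 E24 E28 E49 E53 C12 C21 C26 C33 C47 C60 C81 by argo
  have C57: "cf (2,1,3,0) = 0" using E2 E6 E9 E13 E24 E28 E49 E53 C12 C21 C26 C33 C47 C60 C62 C81 by argo
  have C42: "cf (1,2,3,0) = 0" using E2 E6 E9 E13 E24 E28 E48 E52 C12 C26 C33 C47 C57 C60 C62 C67 C81 by argo
  have C72: "cf (3,2,1,0) = 0" using E2 E6 E9 E13 E24 E28 E48 E52 C12 C26 C33 C42 C47 C57 C60 C62 C67 C81 by argo
  have C78: "cf (4,1,1,0) = 0" using E2 E6 E9 E13 E24 E28 E49 E53 C12 C21 C26 C33 C42 C47 C57 C60 C62 C72 C81 by argo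
  have C53: "cf (2,0,4,0) = - cf (6,0,0,0)" using E8 E26 E50 E58 C12 C21 C26 C33 C42 C47 C57 C60 C62 C67 C72 C78 C81 by argo
  have C6: "cf (0,0,6,0) = cf (6,0,0,0)" using E10 E26 E50 E58 C12 C21 C26 C33 C42 C47 C53 C57 C60 C62 C67 C72 C78 C81 by argo
  have C76: "cf (4,0,2,0) = - cf (6,0,0,0)" using E8 E26 E50 E58 C6 C12 C21 C26 C33 C42 C47 C53 C57 C60 C62 C67 C72 C78 C81 by argo
  have C48: "cf (1,5,0,0) = 0" using E0 E1 E4 E5 E9 E24 E26 E50 C6 C12 C21 C26 C33 C42 C47 C53 C57 C60 C62 C67 C72 C76 C78 C81 by argo
  have C63: "cf (2,4,0,0) = - cf (6,0,0,0)" using E0 E1 E5 E9 E24 E25 E48 E49 C12 C21 C26 C33 C42 C47 C48 C53 C57 C60 C62 C67 C72 C76 C78 C81 by argo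
  have C73: "cf (3,3,0,0) = 0" using E0 E1 E4 E5 E9 E24 E26 E50 C6 C12 C21 C26 C33 C42 C47 C48 C53 C57 C60 C62 C63 C67 C72 C76 C78 C81 by argo
  have C82: "cf (5,1,0,0) = 0" using E0 E1 E4 E5 E9 E24 E26 E50 C6 C12 C21 C26 C33 C42 C47 C48 C53 C57 C60 C62 C63 C67 C72 C73 C76 C78 C81 by argo
  have C79: "cf (4,2,0,0) = - cf (6,0,0,0)" using E0 C48 C63 C73 C82 by argo
  have C27: "cf (0,6,0,0) = cf (6,0,0,0)" using E1 C48 C63 C73 C79 C82 by argo
  have C17: "cf (0,2,4,0) = - cf (6,0,0,0)" using E25 E26 C6 C12 C21 C26 C27 by argo
  have C24: "cf (0,4,2,0) = - cf (6,0,0,0)" using E25 E26 C6 C12 C17 C21 C26 C27 by argo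
  have C70: "cf (3,1,2,0) = 0" using E24 E48 C33 C42 C47 C48 C53 C57 C60 C62 C63 C67 C72 C73 C76 C78 C79 C81 C82 by argo
  have C38: "cf (1,1,4,0) = 0" using E9 C12 C57 C70 C78 C82 by argo
  have C45: "cf (1,3,2,0) = 0" using E24 C33 C38 C42 C47 C48 by argo
  have C49: "cf (2,0,0,4) = - cf (6,0,0,0)" using E3 E7 E16 E19 E23 E32 E35 E36 E39 E64 E67 E72 E75 C48 C63 C73 C79 C82 by argo
  have C58: "cf (2,2,0,2) = 3 * cf (6,0,0,0)" using E3 E7 E16 E17 E19 E20 E21 E23 E36 E64 E71 E72 E75 C48 C49 C63 C73 C79 C82 by argo
  have C74: "cf (4,0,0,2) = - cf (6,0,0,0)" using E16 E20 C49 by argo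
  have C0: "cf (0,0,0,6) = cf (6,0,0,0)" using E19 E23 C49 C74 by argo
  have C13: "cf (0,2,0,4) = - cf (6,0,0,0)" using E33 E35 E37 E39 C0 C27 by argo
  have C22: "cf (0,4,0,2) = - cf (6,0,0,0)" using E33 E35 E37 E39 C0 C13 C27 by argo
  have C2: "cf (0,0,2,4) = - cf (6,0,0,0)" using E42 E43 E46 E47 C0 C6 by argo
  have C4: "cf (0,0,4,2) = - cf (6,0,0,0)" using E42 E43 E46 E47 C0 C2 C6 by argo
  have C68: "cf (3,1,0,2) = 0" using E32 E36 E64 E68 C48 C49 C58 C63 C73 C74 C79 C82 by argo
  have C34: "cf (1,1,0,4) = 0" using E17 E21 C68 C82 by argo
  have C43: "cf (1,3,0,2) = 0" using E32 E36 C34 C48 by argo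
  have C51: "cf (2,0,2,2) = 3 * cf (6,0,0,0)" using E18 E22 E40 E44 E83 E87 C0 C2 C4 C33 C49 C74 C81 by argo
  have C65: "cf (3,0,1,2) = 0" using E40 E44 E80 E84 C33 C49 C51 C53 C67 C74 C76 C81 by argo
  have C29: "cf (1,0,1,4) = 0" using E18 E22 C65 C81 by argo
  have C31: "cf (1,0,3,2) = 0" using E40 E44 C29 C33 by argo
  have C25: "cf (0,5,0,1) = 0" using E3 E7 E17 E33 E35 E64 E72 C0 C13 C22 C27 C34 C43 C48 C49 C58 C63 C68 C73 C74 C79 C82 by argo
  have C7: "cf (0,1,0,5) = 0" using E3 E7 E17 E33 E35 E64 E72 C0 C13 C22 C25 C27 C34 C43 C48 C49 C58 C63 C68 C73 C74 C79 C82 by argo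
  have C18: "cf (0,3,0,3) = 0" using E3 E7 E17 E33 E35 E64 E72 C0 C7 C13 C22 C25 C27 C34 C43 C48 C49 C58 C63 C68 C73 C74 C79 C82 by argo
  have C28: "cf (1,0,0,5) = 0" using E3 E64 E65 E67 C0 C7 C13 C18 C22 C25 C27 C34 C43 C48 C49 C58 C63 C68 C73 C74 C79 C82 by argo
  have C64: "cf (3,0,0,3) = 0" using E16 E19 C0 C28 C49 C74 by argo
  have C80: "cf (5,0,0,1) = 0" using E16 E19 C0 C28 C49 C64 C74 by argo
  have C1: "cf (0,0,1,5) = 0" using E11 E80 E82 E83 C0 C2 C4 C6 C28 C29 C31 C33 C49 C51 C53 C64 C65 C67 C74 C76 C80 C81 by argo
  have C5: "cf (0,0,5,1) = 0" using E42 E43 C0 C1 C2 C4 C6 by argo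
  have C3: "cf (0,0,3,3) = 0" using E42 E43 C0 C1 C2 C4 C5 C6 by argo
  have C46: "cf (1,4,0,1) = 0" using E3 E7 E17 E32 E64 C7 C25 C28 C34 C43 C48 C49 C58 C63 C64 C68 C73 C74 C79 C80 C82 by argo
  have C61: "cf (2,3,0,1) = 0" using E3 E7 E17 E32 E65 C7 C13 C18 C22 C25 C27 C28 C34 C43 C46 C48 C58 C63 C68 C73 C79 C80 C82 by argo
  have C32: "cf (1,0,4,1) = 0" using E11 E15 E18 E40 E80 C1 C5 C28 C29 C31 C33 C49 C51 C53 C64 C65 C67 C74 C76 C80 C81 by argo
  have C52: "cf (2,0,3,1) = 0" using E11 E15 E18 E40 E82 C1 C2 C3 C4 C5 C6 C28 C29 C31 C32 C33 C51 C53 C65 C67 C76 C80 C81 by argo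
  have C54: "cf (2,1,0,3) = 0" using E3 E7 E17 E32 E65 C7 C13 C18 C22 C25 C27 C28 C34 C43 C46 C48 C58 C61 C63 C68 C73 C79 C80 C82 by argo
  have C50: "cf (2,0,1,3) = 0" using E11 E15 E18 E40 E82 C1 C2 C3 C4 C5 C6 C28 C29 C31 C32 C33 C51 C52 C53 C65 C67 C76 C80 C81 by argo
  have C39: "cf (1,2,0,3) = 0" using E3 E7 E17 E32 E64 C7 C25 C28 C34 C43 C46 C48 C49 C54 C58 C61 C63 C64 C68 C73 C74 C79 C80 C82 by argo
  have C30: "cf (1,0,2,3) = 0" using E11 E15 E18 E40 E80 C1 C5 C28 C29 C31 C32 C33 C49 C50 C51 C52 C53 C64 C65 C67 C74 C76 C80 C81 by argo
  have C71: "cf (3,2,0,1) = 0" using E3 E7 E17 E32 E64 C7 C25 C28 C34 C39 C43 C46 C48 C49 C54 C58 C61 C63 C64 C68 C73 C74 C79 C80 C82 by argo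
  have C77: "cf (4,1,0,1) = 0" using E3 E7 E17 E32 E65 C7 C13 C18 C22 C25 C27 C28 C34 C39 C43 C46 C48 C54 C58 C61 C63 C68 C71 C73 C79 C80 C82 by argo
  have C66: "cf (3,0,2,1) = 0" using E11 E15 E18 E40 E80 C1 C5 C28 C29 C30 C31 C32 C33 C49 C50 C51 C52 C53 C64 C65 C67 C74 C76 C80 C81 by argo
  have C75: "cf (4,0,1,1) = 0" using E11 E15 E18 E40 E82 C1 C2 C3 C4 C5 C6 C28 C29 C30 C31 C32 C33 C50 C51 C52 C53 C65 C66 C67 C76 C80 C81 by argo
  have C41: "cf (1,2,2,1) = 0" using E51 E55 E59 E63 C5 C25 C32 C46 C52 C61 C66 C71 C75 C77 C80 by argo
  have C56: "cf (2,1,2,1) = 0" using E27 E31 E51 E55 C5 C25 C32 C41 C46 C52 C61 C66 C71 C75 C77 C80 by argo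
  have C59: "cf (2,2,1,1) = 0" using E27 E31 E51 E59 C5 C25 C32 C41 C46 C52 C56 C61 C66 C71 C75 C77 C80 by argo
  have C55: "cf (2,1,1,2) = 0" using E38 E70 E74 C1 C26 C29 C47 C50 C59 C62 C65 C72 C75 C78 C81 by argo
  have C40: "cf (1,2,1,2) = 0" using E34 E38 E66 E70 C1 C26 C29 C47 C50 C55 C59 C62 C65 C72 C75 C78 C81 by argo
  have C36: "cf (1,1,2,2) = 0" using E41 E45 E81 E85 C7 C12 C34 C38 C54 C55 C56 C57 C68 C70 C77 C78 C82 by argo
  have C15: "cf (0,2,2,2) = 3 * cf (6,0,0,0)" using E27 E34 E38 E98 E99 E101 C0 C1 C2 C3 C4 C5 C6 C7 C12 C13 C17 C18 C21 C22 C24 C25 C26 C27 by argo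
  have C37: "cf (1,1,3,1) = 0" using E27 E34 E41 E51 E66 E81 E96 C1 C5 C7 C12 C25 C26 C28 C29 C30 C31 C32 C33 C34 C36 C38 C39 C40 C41 C42 C43 C45 C46 C47 C48 C50 C52 C54 C55 C56 C57 C59 C61 C62 C65 C66 C68 C70 C71 C72 C75 C77 C78 C80 C81 C82 by argo
  have C35: "cf (1,1,1,3) = 0" using E27 E34 E41 E51 E66 E81 E96 C1 C5 C7 C12 C25 C26 C28 C29 C30 C31 C32 C33 C34 C36 C37 C38 C39 C40 C41 C42 C43 C45 C46 C47 C48 C50 C52 C54 C55 C56 C57 C59 C61 C62 C65 C66 C68 C70 C71 C72 C75 C77 C78 C80 C81 C82 by argo
  have C44: "cf (1,3,1,1) = 0" using E27 E34 E41 E51 E66 E81 E96 C1 C5 C7 C12 C25 C26 C28 C29 C30 C31 C32 C33 C34 C35 C36 C37 C38 C39 C40 C41 C42 C43 C45 C46 C47 C48 C50 C52 C54 C55 C56 C57 C59 C61 C62 C65 C66 C68 C70 C71 C72 C75 C77 C78 C80 C81 C82 by argo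
  have C69: "cf (3,1,1,1) = 0" using E27 E34 E41 E51 E66 E81 E96 C1 C5 C7 C12 C25 C26 C28 C29 C30 C31 C32 C33 C34 C35 C36 C37 C38 C39 C40 C41 C42 C43 C44 C45 C46 C47 C48 C50 C52 C54 C55 C56 C57 C59 C61 C62 C65 C66 C68 C70 C71 C72 C75 C77 C78 C80 C81 C82 by argo
  have C11: "cf (0,1,4,1) = 0" using E27 E31 E34 E41 E45 E97 E98 E99 C0 C1 C2 C3 C4 C5 C6 C7 C12 C13 C15 C17 C18 C21 C22 C24 C25 C26 C27 by argo
  have C16: "cf (0,2,3,1) = 0" using E27 E31 E34 E38 E41 E97 E98 E99 C0 C1 C2 C3 C4 C5 C6 C7 C11 C12 C13 C15 C17 C18 C21 C22 C24 C25 C26 C27 by argo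
  have C8: "cf (0,1,1,4) = 0" using E27 E34 E38 E41 E45 E97 E98 E99 C0 C1 C2 C3 C4 C5 C6 C7 C11 C12 C13 C15 C16 C17 C18 C21 C22 C24 C25 C26 C27 by argo
  have C14: "cf (0,2,1,3) = 0" using E27 E31 E34 E38 E41 E97 E98 E99 C0 C1 C2 C3 C4 C5 C6 C7 C8 C11 C12 C13 C15 C16 C17 C18 C21 C22 C24 C25 C26 C27 by argo
  have C9: "cf (0,1,2,3) = 0" using E27 E31 E34 E41 E45 E97 E98 E99 C0 C1 C2 C3 C4 C5 C6 C7 C8 C11 C12 C13 C14 C15 C16 C17 C18 C21 C22 C24 C25 C26 C27 by argo
  have C10: "cf (0,1,3,2) = 0" using E27 E34 E38 E41 E45 E97 E98 E99 C0 C1 C2 C3 C4 C5 C6 C7 C8 C9 C11 C12 C13 C14 C15 C16 C17 C18 C21 C22 C24 C25 C26 C27 by argo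
  have C19: "cf (0,3,1,2) = 0" using E27 E34 E38 E41 E45 E97 E98 E99 C0 C1 C2 C3 C4 C5 C6 C7 C8 C9 C10 C11 C12 C13 C14 C15 C16 C17 C18 C21 C22 C24 C25 C26 C27 by argo
  have C20: "cf (0,3,2,1) = 0" using E27 E31 E34 E41 E45 E97 E98 E99 C0 C1 C2 C3 C4 C5 C6 C7 C8 C9 C10 C11 C12 C13 C14 C15 C16 C17 C18 C19 C21 C22 C24 C25 C26 C27 by argo
  have C23: "cf (0,4,1,1) = 0" using E27 E31 E34 E38 E41 E97 E98 E99 C0 C1 C2 C3 C4 C5 C6 C7 C8 C9 C10 C11 C12 C13 C14 C15 C16 C17 C18 C19 C20 C21 C22 C24 C25 C26 C27 by argo
  have "g 1 0 0 0 = cf (6,0,0,0)" using G by (simp add: sum_md6)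
  then have t0: "0 \<le> cf (6,0,0,0)" using nn by metis
  show ?thesis
  proof (intro exI conjI allI)
    show "0 \<le> cf (6,0,0,0)" by (fact t0)
    fix a b c d
    show "g a b c d = cf (6,0,0,0) * g4 (a^2) (b^2) (c^2) (d^2)"
      by (simp only: G[rule_format] sum_md6 prod.case C60 C26 C12 C21 C33 C67 C81 C47 C62 C57 C42 C72 C78 C53 C6 C76 C48 C63 C73 C82 C79 C27 C17 C24 C70 C38 C45 C49 C58 C74 C0 C13 C22 C2 C4 C68 C34 C43 C51 C65 C29 C31 C25 C7 C18 C28 C64 C80 C1 C5 C3 C46 C61 C32 C52 C54 C50 C39 C30 C71 C77 C66 C75 C41 C56 C59 C55 C40 C36 C15 C37 C35 C44 C69 C11 C16 C8 C14 C9 C10 C19 C20 C23) (simp add: g4_def S3_def S111_def T21_def algebra_simps flip: power_mult)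
  qed
qed

lemma sumsq_zero:
  assumes "(\<Sum>q\<leftarrow>qs. (F q)^2) = (0::real)" "q \<in> set qs" shows "F q = 0"
  using assms
proof (induction qs)
  case Nil then show ?case by simp
next
  case (Cons x xs)
  have n1: "0 \<le> (\<Sum>q\<leftarrow>xs. (F q)^2)" by (induction xs) auto
  have "(F x)^2 + (\<Sum>q\<leftarrow>xs. (F q)^2) = 0" using Cons.prems by simp
  then have "(F x)^2 = 0" "(\<Sum>q\<leftarrow>xs. (F q)^2) = 0" using n1 by (smt (verit) zero_le_power2)+
  then show ?case using Cons by auto
qed

lemma sumsq_zero2: "(\<forall>q\<in>set qs. F q = 0) \<Longrightarrow> (\<Sum>q\<leftarrow>qs. (F q)^2) = (0::real)"
  by (induction qs) auto

lemma f46_P46: "(\<lambda>a b c d. g4 (a^2) (b^2) (c^2) (d^2)) \<in> P46"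
  unfolding P46_def using form_f46 g4_nonneg by auto

lemma f46_1: "g4 (1^2) (0^2) (0^2) (0^2) = 1"
  by (simp add: g4_def S3_def S111_def T21_def)

lemma f46_ext: "(\<lambda>a b c d. g4 (a^2) (b^2) (c^2) (d^2)) \<in> extremals P46"
  unfolding extremals_def
proof (intro CollectI conjI allI impI)
  show "(\<lambda>a b c d. g4 (a^2) (b^2) (c^2) (d^2)) \<in> P46" by (rule f46_P46)
  show "(\<lambda>a b c d. g4 (a^2) (b^2) (c^2) (d^2)) \<noteq> (\<lambda>a b c d. 0)"
    using f46_1 by (metis zero_neq_one)
  fix g h assume g: "g \<in> P46" and h: "h \<in> P46"
    and e: "(\<lambda>a b c d. g4 (a^2) (b^2) (c^2) (d^2)) = (\<lambda>a b c d. g a b c d + h a b c d)"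
  have e1: "\<forall>a b c d. g4 (a^2) (b^2) (c^2) (d^2) = g a b c d + h a b c d" using e by metis
  have e2: "\<forall>a b c d. g4 (a^2) (b^2) (c^2) (d^2) = h a b c d + g a b c d" using e1 by (simp add: add.commute)
  obtain t where "t \<ge> 0" "\<forall>a b c d. g a b c d = t * g4 (a^2) (b^2) (c^2) (d^2)" using ext46[OF g h e1] by blast
  then show "\<exists>t\<ge>0. g = (\<lambda>a b c d. t * g4 (a^2) (b^2) (c^2) (d^2))" by (intro exI[of _ t]) (auto intro!: ext)
  obtain s where "s \<ge> 0" "\<forall>a b c d. h a b c d = s * g4 (a^2) (b^2) (c^2) (d^2)" using ext46[OF h g e2] by blast
  then show "\<exists>t\<ge>0. h = (\<lambda>a b c d. t * g4 (a^2) (b^2) (c^2) (d^2))" by (intro exI[of _ s]) (auto intro!: ext)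
qed

lemma f46_not_sos: "(\<lambda>a b c d. g4 (a^2) (b^2) (c^2) (d^2)) \<notin> Sigma46"
proof
  assume "(\<lambda>a b c d. g4 (a^2) (b^2) (c^2) (d^2)) \<in> Sigma46"
  then obtain qs where Q: "\<forall>q\<in>set qs. is_form 3 q"
    and e: "(\<lambda>a b c d. g4 (a^2) (b^2) (c^2) (d^2)) = (\<lambda>a b c d. \<Sum>q\<leftarrow>qs. (q a b c d)^2)"
    unfolding Sigma46_def by blast
  have e1: "g4 (a^2) (b^2) (c^2) (d^2) = (\<Sum>q\<leftarrow>qs. (q a b c d)^2)" for a b c d using e by metis
  have Z: "q a b c d = 0" if "q \<in> set qs" "g4 (a^2) (b^2) (c^2) (d^2) = 0" for q a b c d
    using sumsq_zero[of "\<lambda>q. q a b c d" qs q] that e1 by metis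
  have "q 1 0 0 0 = 0" if "q \<in> set qs" for q
    by (rule cubic_zero[OF Q[rule_format, OF that]]; rule Z[OF that]; simp add: g4_def S3_def S111_def T21_def)
  then have "(\<Sum>q\<leftarrow>qs. (q 1 0 0 0)^2) = 0" by (intro sumsq_zero2) auto
  then show False using e1[of 1 0 0 0] f46_1 by simp
qed

lemma g4_P43: "g4 \<in> P43plus"
  unfolding P43plus_def using form_g4 g4_nonneg by auto

lemma g4_ext: "g4 \<in> extremals P43plus"
  unfolding extremals_def
proof (intro CollectI conjI allI impI)
  show "g4 \<in> P43plus" by (rule g4_P43)
  have "g4 1 0 0 0 = 1" by (simp add: g4_def S3_def S111_def T21_def)
  then show "g4 \<noteq> (\<lambda>a b c d. 0)" by (metis zero_neq_one)
  have key: "\<exists>t\<ge>0. g = (\<lambda>a b c d. t * g4 a b c d)"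
    if g: "g \<in> P43plus" and h: "h \<in> P43plus" and e1: "\<forall>a b c d. g4 a b c d = g a b c d + h a b c d" for g h
  proof -
    have gP: "(\<lambda>a b c d. g (a^2) (b^2) (c^2) (d^2)) \<in> P46"
      using g unfolding P43plus_def P46_def by (auto intro: form_sq)
    have hP: "(\<lambda>a b c d. h (a^2) (b^2) (c^2) (d^2)) \<in> P46"
      using h unfolding P43plus_def P46_def by (auto intro: form_sq)
    have e2: "\<forall>a b c d. g4 (a^2) (b^2) (c^2) (d^2) = g (a^2) (b^2) (c^2) (d^2) + h (a^2) (b^2) (c^2) (d^2)"
      using e1 by blast
    obtain t where t: "t \<ge> 0" "\<forall>a b c d. g (a^2) (b^2) (c^2) (d^2) = t * g4 (a^2) (b^2) (c^2) (d^2)"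
      using ext46[OF gP hP] e2 by blast
    have o: "g a b c d = t * g4 a b c d" if "0\<le>a" "0\<le>b" "0\<le>c" "0\<le>d" for a b c d
      using t(2)[rule_format, of "sqrt a" "sqrt b" "sqrt c" "sqrt d"] that by simp
    have "g = (\<lambda>a b c d. t * g4 a b c d)"
      by (rule cubic_det) (use g o in \<open>auto simp: P43plus_def\<close>)
    then show ?thesis using t(1) by blast
  qed
  fix g h assume g: "g \<in> P43plus" and h: "h \<in> P43plus" and e: "g4 = (\<lambda>a b c d. g a b c d + h a b c d)"
  have e1: "\<forall>a b c d. g4 a b c d = g a b c d + h a b c d" using e by metis
  have e2: "\<forall>a b c d. g4 a b c d = h a b c d + g a b c d" using e1 by (simp add: add.commute)
  show "\<exists>t\<ge>0. g = (\<lambda>a b c d. t * g4 a b c d)" by (rule key[OF g h e1])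
  show "\<exists>t\<ge>0. h = (\<lambda>a b c d. t * g4 a b c d)" by (rule key[OF h g e2])
qed

theorem theorem2p10:
  shows "(\<lambda>a b c d. g4 (a^2) (b^2) (c^2) (d^2)) \<in> extremals P46 - Sigma46
         \<and> g4 \<in> extremals P43plus"
  using f46_ext f46_not_sos g4_ext by blast

end
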